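(* Let $\lambda>0$, $\ell>0$ and let $n\ge n_{\lambda,\ell}$ be an integer. Then $\mathcal{E}_\lambda[\gamma_{\rm larc}^{\lambda,\ell,n}]\le\mathcal{E}_\lambda[\gamma_{\rm sarc}^{\lambda,\ell,n}]$, with equality if and only if $\lambda\ell^2=m^2\hat\lambda$ for some $m\in\mathbb{N}$ and $n=n_{\lambda,\ell}$.
   Context: Elliptic functions: for $q\in[0,1)$, $x\in\mathbb{R}$, $\mathrm{F}(x,q)=\int_0^x(1-q^2\sin^2\theta)^{-1/2}\,d\theta$, $\mathrm{E}(x,q)=\int_0^x(1-q^2\sin^2\theta)^{1/2}\,d\theta$, $\mathrm{K}(q)=\mathrm{F}(\pi/2,q)$, $\mathrm{E}(q)=\mathrm{E}(\pi/2,q)$; $\mathrm{am}(\cdot,q)$ is the inverse of $x\mapsto\mathrm{F}(x,q)$, $\mathrm{cn}(x,q)=\cos\mathrm{am}(x,q)$. The function $q\mapsto2\mathrm{E}(q)-\mathrm{K}(q)$ is strictly decreasing on $[0,1)$ with unique zero $q_*\in(0,1)$. On $[1/\sqrt2,1)$ let $f(q)=(4q^4-5q^2+1)\mathrm{K}(q)+(-8q^4+8q^2-1)\mathrm{E}(q)$ and $g(q)=8(2\mathrm{E}(q)-\mathrm{K}(q))^2(2q^2-1)$. $f$ has a unique zero $\hat q\in[1/\sqrt2,1)$; $\hat\lambda:=g(\hat q)\approx0.70107$. $g(1/\sqrt2)=0$, $g$ strictly increasing on $[1/\sqrt2,\hat q]$, strictly decreasing on $[\hat q,q_*]$. For $c\in(0,\hat\lambda]$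 let $q_1(c)\in(1/\sqrt2,\hat q]$, $q_2(c)\in[\hat q,q_* )$ solve $g(q)=c$ ($q_1(\hat\lambda)=q_2(\hat\lambda)=\hat q$). $n_{\lambda,\ell}=\lceil\sqrt{\lambda\ell^2/\hat\lambda}\rceil$. $\mathcal{E}_\lambda[\gamma]=\int_\gamma k^2\,ds+\lambda L[\gamma]$ ($k$ signed curvature, $s$ arclength, $L$ length). Curves (arclength parametrized on $[0,2n\mathrm{K}(q)/\alpha]$): for $n\ge n_{\lambda,\ell}$, $\gamma_{\rm sarc}^{\lambda,\ell,n}(s)=\frac1\alpha\big(2\mathrm{E}(\mathrm{am}(\alpha s-\mathrm{K}(q),q),q)+2\mathrm{E}(q)-\alpha s,\ 2q\,\mathrm{cn}(\alpha s-\mathrm{K}(q),q)\big)$ with $q=q_1(\lambda\ell^2/n^2)$, $\alpha=\frac{2n}{\ell}(2\mathrm{E}(q)-\mathrm{K}(q))$; $\gamma_{\rm larc}^{\lambda,\ell,n}$ is the same formula with $q=q_2(\lambda\ell^2/n^2)$. *)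

theory Defs
  imports "HOL-Analysis.Analysis"
begin

definition oint :: "(real \<Rightarrow> real) \<Rightarrow> real \<Rightarrow> real \<Rightarrow> real" where
  "oint f a b = (if a \<le> b then integral {a..b} f else - integral {b..a} f)"

definition ellF :: "real \<Rightarrow> real \<Rightarrow> real" where
  "ellF x q = oint (\<lambda>\<theta>. 1 / sqrt (1 - q\<^sup>2 * (sin \<theta>)\<^sup>2)) 0 x"

definition ellE :: "real \<Rightarrow> real \<Rightarrow> real" where
  "ellE x q = oint (\<lambda>\<theta>. sqrt (1 - q\<^sup>2 * (sin \<theta>)\<^sup>2)) 0 x"

definition ellK :: "real \<Rightarrow> real" where
  "ellK q = ellF (pi / 2) q"

definition ellEc :: "real \<Rightarrow> real" where
  "ellEc q = ellE (pi / 2) q"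

definition am :: "real \<Rightarrow> real \<Rightarrow> real" where
  "am x q = (THE y. ellF y q = x)"

definition cn :: "real \<Rightarrow> real \<Rightarrow> real" where
  "cn x q = cos (am x q)"

definition q_star :: real where
  "q_star = (THE q. 0 < q \<and> q < 1 \<and> 2 * ellEc q - ellK q = 0)"

definition f_aux :: "real \<Rightarrow> real" where
  "f_aux q = (4*q^4 - 5*q\<^sup>2 + 1) * ellK q + (-8*q^4 + 8*q\<^sup>2 - 1) * ellEc q"

definition g_aux :: "real \<Rightarrow> real" where
  "g_aux q = 8 * (2 * ellEc q - ellK q)\<^sup>2 * (2*q\<^sup>2 - 1)"

definition q_hat :: real where
  "q_hat = (THE q. 1 / sqrt 2 \<le> q \<and> q < 1 \<and> f_aux q = 0)"

definition lambda_hat :: real where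
  "lambda_hat = g_aux q_hat"

definition q1 :: "real \<Rightarrow> real" where
  "q1 c = (THE q. 1 / sqrt 2 < q \<and> q \<le> q_hat \<and> g_aux q = c)"

definition q2 :: "real \<Rightarrow> real" where
  "q2 c = (THE q. q_hat \<le> q \<and> q < q_star \<and> g_aux q = c)"

definition n_lam :: "real \<Rightarrow> real \<Rightarrow> int" where
  "n_lam lam l = \<lceil>sqrt (lam * l\<^sup>2 / lambda_hat)\<rceil>"

definition alpha_of :: "real \<Rightarrow> nat \<Rightarrow> real \<Rightarrow> real" where
  "alpha_of l n q = 2 * real n / l * (2 * ellEc q - ellK q)"

definition arc_curve :: "real \<Rightarrow> nat \<Rightarrow> real \<Rightarrow> real \<Rightarrow> real \<times> real" where
  "arc_curve l n q s = (let \<alpha> = alpha_of l n q in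
     ((2 * ellE (am (\<alpha> * s - ellK q) q) q + 2 * ellEc q - \<alpha> * s) / \<alpha>,
      2 * q * cn (\<alpha> * s - ellK q) q / \<alpha>))"

definition arc_end :: "real \<Rightarrow> nat \<Rightarrow> real \<Rightarrow> real" where
  "arc_end l n q = 2 * real n * ellK q / alpha_of l n q"

definition gamma_sarc :: "real \<Rightarrow> real \<Rightarrow> nat \<Rightarrow> real \<Rightarrow> real \<times> real" where
  "gamma_sarc lam l n = arc_curve l n (q1 (lam * l\<^sup>2 / (real n)\<^sup>2))"

definition gamma_larc :: "real \<Rightarrow> real \<Rightarrow> nat \<Rightarrow> real \<Rightarrow> real \<times> real" where
  "gamma_larc lam l n = arc_curve l n (q2 (lam * l\<^sup>2 / (real n)\<^sup>2))"

definition sarc_end :: "real \<Rightarrow> real \<Rightarrow> nat \<Rightarrow> real" where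
  "sarc_end lam l n = arc_end l n (q1 (lam * l\<^sup>2 / (real n)\<^sup>2))"

definition larc_end :: "real \<Rightarrow> real \<Rightarrow> nat \<Rightarrow> real" where
  "larc_end lam l n = arc_end l n (q2 (lam * l\<^sup>2 / (real n)\<^sup>2))"

definition speed :: "(real \<Rightarrow> real \<times> real) \<Rightarrow> real \<Rightarrow> real" where
  "speed \<gamma> t = sqrt ((deriv (\<lambda>u. fst (\<gamma> u)) t)\<^sup>2 + (deriv (\<lambda>u. snd (\<gamma> u)) t)\<^sup>2)"

definition signed_curvature :: "(real \<Rightarrow> real \<times> real) \<Rightarrow> real \<Rightarrow> real" where
  "signed_curvature \<gamma> t =
     (deriv (\<lambda>u. fst (\<gamma> u)) t * deriv (deriv (\<lambda>u. snd (\<gamma> u))) t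
      - deriv (\<lambda>u. snd (\<gamma> u)) t * deriv (deriv (\<lambda>u. fst (\<gamma> u))) t) / (speed \<gamma> t) ^ 3"

definition curve_length :: "(real \<Rightarrow> real \<times> real) \<Rightarrow> real \<Rightarrow> real \<Rightarrow> real" where
  "curve_length \<gamma> a b = integral {a..b} (speed \<gamma>)"

definition energy :: "real \<Rightarrow> (real \<Rightarrow> real \<times> real) \<Rightarrow> real \<Rightarrow> real \<Rightarrow> real" where
  "energy lam \<gamma> a b =
     integral {a..b} (\<lambda>t. (signed_curvature \<gamma> t)\<^sup>2 * speed \<gamma> t) + lam * curve_length \<gamma> a b"

end

theory Submission imports Defs begin

lemma ftc_at:
  fixes F F' :: "real \<Rightarrow> real"
  assumes "a \<le> b" and "\<And>x. a \<le> x \<Longrightarrow> x \<le> b \<Longrightarrow> (F has_real_derivative F' x) (at x)"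
  shows "(F' has_integral (F b - F a)) {a..b}"
  apply (rule fundamental_theorem_of_calculus[OF assms(1)])
  using assms(2) by (auto simp: has_real_derivative_iff_has_vector_derivative intro: has_vector_derivative_at_within)

lemma oint_alt: "oint f a b = integral {a..b} f - integral {b..a} f"
  by (cases a b rule: linorder_cases) (auto simp: oint_def)

lemma oint_self [simp]: "oint f a a = 0"
  by (simp add: oint_def)

lemma oint_deriv:
  fixes f :: "real \<Rightarrow> real"
  assumes cf: "continuous_on UNIV f"
  shows "((\<lambda>x. oint f c x) has_real_derivative f x) (at x)"
proof -
  define M where "M = \<bar>c\<bar> + \<bar>x\<bar> + 1"
  have comb: "oint f c y = integral {-M..y} f - integral {-M..c} f" if "-M \<le> y" for y
  proof (cases "c \<le> y")
    case True
    have "integral {-M..c} f + integral {c..y} f = integral {-M..y} f"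
      by (rule Henstock_Kurzweil_Integration.integral_combine) (use True that M_def in \<open>auto intro: integrable_continuous_real continuous_on_subset[OF cf]\<close>)
    then show ?thesis using True by (simp add: oint_def)
  next
    case False
    have "integral {-M..y} f + integral {y..c} f = integral {-M..c} f"
      by (rule Henstock_Kurzweil_Integration.integral_combine) (use False that M_def in \<open>auto intro: integrable_continuous_real continuous_on_subset[OF cf]\<close>)
    then show ?thesis using False by (simp add: oint_def)
  qed
  have "((\<lambda>y. integral {-M..y} f) has_real_derivative f x) (at x within {-M..M})"
    by (rule integral_has_real_derivative) (use M_def in \<open>auto intro: continuous_on_subset[OF cf]\<close>)
  then have "((\<lambda>y. integral {-M..y} f) has_real_derivative f x) (at x)"
    using at_within_Icc_at[of "-M" x M] M_def by auto
  then have "((\<lambda>y. integral {-M..y} f - integral {-M..c} f) has_real_derivative f x) (at x)"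
    by (auto intro!: derivative_eq_intros)
  then show ?thesis
    by (rule has_field_derivative_transform_within_open[where S="{-M<..}"]) (use M_def comb in auto)
qed

lemma oint_odd:
  fixes f :: "real \<Rightarrow> real"
  assumes cf: "continuous_on UNIV f" and ev: "\<And>t. f (-t) = f t"
  shows "oint f 0 (-x) = - oint f 0 x"
proof -
  have "\<forall>y. ((\<lambda>x. oint f 0 x + oint f 0 (-x)) has_real_derivative 0) (at y)"
  proof
    fix y
    have "((\<lambda>x. oint f 0 x + oint f 0 (-x)) has_real_derivative f y + f (-y) * (-1)) (at y)"
      by (rule derivative_eq_intros oint_deriv[OF cf] DERIV_chain2[OF oint_deriv[OF cf]] | simp)+
    then show "((\<lambda>x. oint f 0 x + oint f 0 (-x)) has_real_derivative 0) (at y)" using ev by simp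
  qed
  from DERIV_isconst_all[OF this, of x 0] show ?thesis by simp
qed

lemma oint_period:
  fixes f :: "real \<Rightarrow> real"
  assumes cf: "continuous_on UNIV f" and ev: "\<And>t. f (-t) = f t" and per: "\<And>t. f (t + pi) = f t"
  shows "oint f 0 (x + pi) = oint f 0 x + 2 * oint f 0 (pi/2)"
proof -
  have "\<forall>y. ((\<lambda>x. oint f 0 (x + pi) - oint f 0 x) has_real_derivative 0) (at y)"
  proof
    fix y
    have "((\<lambda>x. oint f 0 (x + pi) - oint f 0 x) has_real_derivative f (y + pi) * 1 - f y) (at y)"
      by (rule derivative_eq_intros oint_deriv[OF cf] DERIV_chain2[OF oint_deriv[OF cf]] | simp)+
    then show "((\<lambda>x. oint f 0 (x + pi) - oint f 0 x) has_real_derivative 0) (at y)" using per by simp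
  qed
  from DERIV_isconst_all[OF this, of x "-pi/2"] oint_odd[OF cf ev, of "pi/2"] show ?thesis by simp
qed

definition Dl :: "real \<Rightarrow> real \<Rightarrow> real" where
  "Dl q t = sqrt (1 - q\<^sup>2 * (sin t)\<^sup>2)"

lemma rad_pos: "(q::real)\<^sup>2 < 1 \<Longrightarrow> 0 < 1 - q\<^sup>2 * (sin t)\<^sup>2"
proof -
  assume "q\<^sup>2 < 1"
  moreover have "(sin t)\<^sup>2 \<le> 1" using abs_sin_le_one[of t] abs_square_le_1 by blast
  ultimately have "q\<^sup>2 * (sin t)\<^sup>2 \<le> q\<^sup>2" by (simp add: mult_left_le)
  with \<open>q\<^sup>2 < 1\<close> show ?thesis by linarith
qed

lemma rad_ne: "(q::real)\<^sup>2 < 1 \<Longrightarrow> q\<^sup>2 * (sin t)\<^sup>2 \<noteq> 1"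
  using rad_pos[of q t] by auto

lemma Dl_pos: "q\<^sup>2 < 1 \<Longrightarrow> 0 < Dl q t"
  using rad_pos[of q t] by (simp add: Dl_def)

lemma Dl_ne: "q\<^sup>2 < 1 \<Longrightarrow> Dl q t \<noteq> 0"
  using Dl_pos[of q t] by simp

lemma Dl_sq: "q\<^sup>2 < 1 \<Longrightarrow> (Dl q t)\<^sup>2 = 1 - q\<^sup>2 * (sin t)\<^sup>2"
  using rad_pos[of q t] by (simp add: Dl_def)

lemma Dl_le1: "q\<^sup>2 < 1 \<Longrightarrow> Dl q t \<le> 1"
  unfolding Dl_def by (rule real_sqrt_le_1_iff[THEN iffD2]) (simp add: rad_pos less_imp_le)

lemma contF: "(q::real)\<^sup>2 < 1 \<Longrightarrow> continuous_on UNIV (\<lambda>t. 1 / sqrt (1 - q\<^sup>2 * (sin t)\<^sup>2))"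
  using rad_pos[of q] by (auto intro!: continuous_intros simp: less_imp_le rad_ne)

lemma contE: "continuous_on UNIV (\<lambda>t. sqrt (1 - (q::real)\<^sup>2 * (sin t)\<^sup>2))"
  by (auto intro!: continuous_intros)

lemma ellF_deriv: "q\<^sup>2 < 1 \<Longrightarrow> ((\<lambda>x. ellF x q) has_real_derivative 1 / Dl q x) (at x)"
  unfolding ellF_def Dl_def by (rule oint_deriv[OF contF])

lemma ellE_deriv: "((\<lambda>x. ellE x q) has_real_derivative Dl q x) (at x)"
  unfolding ellE_def Dl_def by (rule oint_deriv[OF contE])

lemma ellF_odd: "q\<^sup>2 < 1 \<Longrightarrow> ellF (-x) q = - ellF x q"
  unfolding ellF_def by (rule oint_odd[OF contF]) auto

lemma ellE_odd: "ellE (-x) q = - ellE x q"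
  unfolding ellE_def by (rule oint_odd[OF contE]) auto

lemma ellF_period: "q\<^sup>2 < 1 \<Longrightarrow> ellF (x + pi) q = ellF x q + 2 * ellK q"
  unfolding ellK_def ellF_def by (rule oint_period[OF contF]) auto

lemma ellE_period: "ellE (x + pi) q = ellE x q + 2 * ellEc q"
  unfolding ellEc_def ellE_def by (rule oint_period[OF contE]) auto

lemma ellF_0 [simp]: "ellF 0 q = 0" by (simp add: ellF_def)
lemma ellE_0 [simp]: "ellE 0 q = 0" by (simp add: ellE_def)

lemma ellF_half: "q\<^sup>2 < 1 \<Longrightarrow> ellF (- pi/2 + real n * pi) q = (2 * real n - 1) * ellK q"
proof (induction n)
  case 0
  then show ?case using ellF_odd[of q "pi/2"] by (simp add: ellK_def)
next
  case (Suc n)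
  have "ellF (- pi/2 + real (Suc n) * pi) q = ellF ((- pi/2 + real n * pi) + pi) q"
    by (simp add: algebra_simps)
  also have "\<dots> = ellF (- pi/2 + real n * pi) q + 2 * ellK q" by (rule ellF_period[OF Suc.prems])
  also have "\<dots> = (2 * real n - 1) * ellK q + 2 * ellK q" using Suc by simp
  finally show ?case by (simp add: algebra_simps)
qed

lemma ellE_half: "ellE (- pi/2 + real n * pi) q = (2 * real n - 1) * ellEc q"
proof (induction n)
  case 0
  then show ?case using ellE_odd[of "pi/2" q] by (simp add: ellEc_def)
next
  case (Suc n)
  have "ellE (- pi/2 + real (Suc n) * pi) q = ellE ((- pi/2 + real n * pi) + pi) q"
    by (simp add: algebra_simps)
  also have "\<dots> = ellE (- pi/2 + real n * pi) q + 2 * ellEc q" by (rule ellE_period)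
  also have "\<dots> = (2 * real n - 1) * ellEc q + 2 * ellEc q" using Suc by simp
  finally show ?case by (simp add: algebra_simps)
qed

lemma ellF_strict_mono: "q\<^sup>2 < 1 \<Longrightarrow> x < y \<Longrightarrow> ellF x q < ellF y q"
  by (rule DERIV_pos_imp_increasing[where f="\<lambda>x. ellF x q"]) (auto intro!: ellF_deriv Dl_pos)

lemma ellK_pos: "q\<^sup>2 < 1 \<Longrightarrow> 0 < ellK q"
  using ellF_strict_mono[of q 0 "pi/2"] by (simp add: ellK_def)

lemma ellF_cont: "q\<^sup>2 < 1 \<Longrightarrow> isCont (\<lambda>x. ellF x q) x"
  using ellF_deriv DERIV_isCont by blast

lemma ellF_surj: assumes q: "q\<^sup>2 < 1" shows "\<exists>x. ellF x q = y"
proof -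
  have K: "0 < ellK q" using ellK_pos[OF q] .
  obtain N :: nat where N: "\<bar>y\<bar> / ellK q < real N" using reals_Archimedean2 by blast
  then have "\<bar>y\<bar> < real N * ellK q" using K by (simp add: field_simps)
  then have N1: "1 \<le> N" using K by (cases N) auto
  have b: "ellF (- pi/2 + real N * pi) q = (2 * real N - 1) * ellK q" by (rule ellF_half[OF q])
  have a: "ellF (- (- pi/2 + real N * pi)) q = - ((2 * real N - 1) * ellK q)"
    by (simp only: ellF_odd[OF q] b)
  have "(2 * real N - 1) * ellK q \<ge> real N * ellK q" using N1 K by (simp add: algebra_simps)
  then have y1: "ellF (- (- pi/2 + real N * pi)) q \<le> y" and y2: "y \<le> ellF (- pi/2 + real N * pi) q"
    using a b \<open>\<bar>y\<bar> < real N * ellK q\<close> by linarith+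
  have le: "- (- pi/2 + real N * pi) \<le> - pi/2 + real N * pi" using N1 pi_gt_zero
  proof -
    have "pi/2 \<le> real N * pi" using N1 pi_gt_zero by (simp add: mult_left_le)
    then show ?thesis by linarith
  qed
  show ?thesis
    using IVT'[of "\<lambda>x. ellF x q", OF y1 y2 le] ellF_cont[OF q] continuous_at_imp_continuous_on by blast
qed

lemma am_eq: "q\<^sup>2 < 1 \<Longrightarrow> ellF (am y q) q = y"
proof -
  assume q: "q\<^sup>2 < 1"
  obtain x where x: "ellF x q = y" using ellF_surj[OF q] by blast
  have "(THE z. ellF z q = y) = x"
  proof (rule the_equality)
    show "ellF x q = y" by (rule x)
    fix z assume "ellF z q = y"
    then show "z = x" using x q ellF_strict_mono by (metis linorder_neqE_linordered_idom less_irrefl)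
  qed
  then show ?thesis using x by (simp add: am_def)
qed

lemma am_ellF: "q\<^sup>2 < 1 \<Longrightarrow> am (ellF x q) q = x"
  by (metis am_eq ellF_strict_mono linorder_neqE_linordered_idom less_irrefl)

lemma am_cont: assumes q: "q\<^sup>2 < 1" shows "isCont (\<lambda>y. am y q) y"
proof -
  have "isCont (\<lambda>y. am y q) (ellF (am y q) q)"
    by (rule isCont_inverse_function[where d=1]) (auto simp: am_ellF[OF q] ellF_cont[OF q])
  then show ?thesis using am_eq[OF q] by simp
qed

lemma am_deriv: assumes q: "q\<^sup>2 < 1" shows "((\<lambda>y. am y q) has_real_derivative Dl q (am y q)) (at y)"
proof -
  have "((\<lambda>y. am y q) has_real_derivative inverse (1 / Dl q (am y q))) (at y)"
    by (rule DERIV_inverse_function[where f="\<lambda>x. ellF x q" and a="y - 1" and b="y + 1"])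
       (auto simp: ellF_deriv[OF q] Dl_ne[OF q] am_eq[OF q] am_cont[OF q])
  then show ?thesis by simp
qed

lemma ellK_int: "ellK q = integral {0..pi/2} (\<lambda>t. 1 / Dl q t)"
  by (simp add: ellK_def ellF_def oint_def Dl_def)

lemma ellEc_int: "ellEc q = integral {0..pi/2} (\<lambda>t. Dl q t)"
  by (simp add: ellEc_def ellE_def oint_def Dl_def)

lemma sqrt_chain:
  assumes "(u has_real_derivative u') (at x)" and "0 < u x"
  shows "((\<lambda>x. sqrt (u x)) has_real_derivative u' / (2 * sqrt (u x))) (at x)"
  using DERIV_chain2[OF DERIV_real_sqrt[OF assms(2)] assms(1)] by (simp add: field_simps)

lemma Dl_deriv_t: assumes q: "q\<^sup>2 < 1"
  shows "((\<lambda>t. Dl q t) has_real_derivative - (q\<^sup>2 * sin t * cos t) / Dl q t) (at t)"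
proof -
  have i: "((\<lambda>t. 1 - q\<^sup>2 * (sin t)\<^sup>2) has_real_derivative - (q\<^sup>2 * (2 * sin t * cos t))) (at t)"
    by (auto intro!: derivative_eq_intros simp: power2_eq_square)
  show ?thesis using sqrt_chain[OF i rad_pos[OF q]] unfolding Dl_def by (simp add: field_simps)
qed

lemma Dl_deriv_q: assumes q: "q\<^sup>2 < 1"
  shows "((\<lambda>q. Dl q t) has_real_derivative - (q * (sin t)\<^sup>2) / Dl q t) (at q)"
proof -
  have i: "((\<lambda>q. 1 - q\<^sup>2 * (sin t)\<^sup>2) has_real_derivative - (2 * q * (sin t)\<^sup>2)) (at q)"
    by (auto intro!: derivative_eq_intros simp: power2_eq_square)
  show ?thesis using sqrt_chain[OF i rad_pos[OF q]] unfolding Dl_def by (simp add: field_simps)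
qed

lemma sq_lt1: "(x::real) \<in> {-1<..<1} \<Longrightarrow> x\<^sup>2 < 1"
  by (simp add: abs_square_less_1 abs_less_iff)

lemma leib:
  fixes f fx :: "real \<Rightarrow> real \<Rightarrow> real"
  assumes q: "q \<in> {-1<..<1}"
    and d: "\<And>x t. x \<in> {-1<..<1} \<Longrightarrow> ((\<lambda>x. f x t) has_real_derivative fx x t) (at x)"
    and i: "\<And>x. x \<in> {-1<..<1} \<Longrightarrow> f x integrable_on {0..pi/2}"
    and c: "continuous_on ({-1<..<1} \<times> {0..pi/2}) (\<lambda>(x, t). fx x t)"
  shows "((\<lambda>x. integral {0..pi/2} (f x)) has_real_derivative integral {0..pi/2} (fx q)) (at q)"
proof -
  have "((\<lambda>x. integral (cbox 0 (pi/2)) (f x)) has_real_derivative integral (cbox 0 (pi/2)) (fx q)) (at q within {-1<..<1})"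
  proof (rule leibniz_rule_field_derivative)
    fix x t :: real assume x: "x \<in> {-1<..<1}"
    show "((\<lambda>x. f x t) has_real_derivative fx x t) (at x within {-1<..<1})"
      using d[OF x] by (rule has_field_derivative_at_within)
  next
    fix x :: real assume "x \<in> {-1<..<1}"
    then show "f x integrable_on cbox 0 (pi/2)" unfolding cbox_interval by (rule i)
  next
    show "continuous_on ({-1<..<1} \<times> cbox 0 (pi/2)) (\<lambda>(x, t). fx x t)" unfolding cbox_interval by (rule c)
  qed (rule q, rule convex_real_interval)
  then show ?thesis using q at_within_open[of q "{-1<..<1}"] by (simp add: cbox_interval)
qed

lemma cont_Dl: "continuous_on UNIV (\<lambda>t. Dl q t)"
  unfolding Dl_def by (intro continuous_intros)

lemma Dl_ne_pair: "z \<in> {-1<..<1} \<times> S \<Longrightarrow> sqrt (1 - (fst z)\<^sup>2 * (sin (snd z))\<^sup>2) \<noteq> 0"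
  using Dl_ne[OF sq_lt1, of "fst z" "snd z"] by (auto simp: Dl_def mem_Times_iff)

lemma rad_ne': "-1 < (x::real) \<Longrightarrow> x < 1 \<Longrightarrow> x\<^sup>2 * (sin y)\<^sup>2 \<noteq> 1"
  using rad_ne[OF sq_lt1, of x y] by auto

lemma K_deriv_int: assumes q: "q \<in> {-1<..<1}"
  shows "(ellK has_real_derivative integral {0..pi/2} (\<lambda>t. q * (sin t)\<^sup>2 / (Dl q t)^3)) (at q)"
proof -
  have "((\<lambda>x. integral {0..pi/2} (\<lambda>t. 1 / Dl x t)) has_real_derivative integral {0..pi/2} (\<lambda>t. q * (sin t)\<^sup>2 / (Dl q t)^3)) (at q)"
  proof (rule leib[OF q])
    fix x t :: real assume x: "x \<in> {-1<..<1}"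
    have "((\<lambda>x. 1 / Dl x t) has_real_derivative - (- (x * (sin t)\<^sup>2) / Dl x t) / (Dl x t * Dl x t)) (at x)"
      by (rule derivative_eq_intros Dl_deriv_q[OF sq_lt1[OF x]] refl | simp add: Dl_ne[OF sq_lt1[OF x]])+
    then show "((\<lambda>x. 1 / Dl x t) has_real_derivative x * (sin t)\<^sup>2 / (Dl x t)^3) (at x)"
      using Dl_ne[OF sq_lt1[OF x], of t] by (simp add: field_simps power3_eq_cube)
  next
    fix x :: real assume x: "x \<in> {-1<..<1}"
    show "(\<lambda>t. 1 / Dl x t) integrable_on {0..pi/2}"
      by (rule integrable_continuous_real) 
         (auto intro!: continuous_intros intro: continuous_on_subset[OF cont_Dl] simp: Dl_ne[OF sq_lt1[OF x]])
  next
    have "continuous_on ({-1<..<1} \<times> {0..pi/2}) (\<lambda>z::real\<times>real. fst z * (sin (snd z))\<^sup>2 / (sqrt (1 - (fst z)\<^sup>2 * (sin (snd z))\<^sup>2))^3)"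
      by (intro continuous_intros) (auto dest: Dl_ne_pair simp: rad_ne')
    then show "continuous_on ({-1<..<1} \<times> {0..pi/2}) (\<lambda>(x, t). x * (sin t)\<^sup>2 / (Dl x t)^3)"
      by (simp add: case_prod_unfold Dl_def)
  qed
  then show ?thesis by (simp add: ellK_int[abs_def])
qed

lemma E_deriv_int: assumes q: "q \<in> {-1<..<1}"
  shows "(ellEc has_real_derivative integral {0..pi/2} (\<lambda>t. - (q * (sin t)\<^sup>2) / Dl q t)) (at q)"
proof -
  have "((\<lambda>x. integral {0..pi/2} (\<lambda>t. Dl x t)) has_real_derivative integral {0..pi/2} (\<lambda>t. - (q * (sin t)\<^sup>2) / Dl q t)) (at q)"
  proof (rule leib[OF q])
    fix x t :: real assume x: "x \<in> {-1<..<1}"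
    show "((\<lambda>x. Dl x t) has_real_derivative - (x * (sin t)\<^sup>2) / Dl x t) (at x)"
      by (rule Dl_deriv_q[OF sq_lt1[OF x]])
  next
    fix x :: real assume x: "x \<in> {-1<..<1}"
    show "(\<lambda>t. Dl x t) integrable_on {0..pi/2}"
      by (rule integrable_continuous_real) (auto intro: continuous_on_subset[OF cont_Dl])
  next
    have "continuous_on ({-1<..<1} \<times> {0..pi/2}) (\<lambda>z::real\<times>real. - (fst z * (sin (snd z))\<^sup>2) / (sqrt (1 - (fst z)\<^sup>2 * (sin (snd z))\<^sup>2)))"
      by (intro continuous_intros) (auto dest: Dl_ne_pair simp: rad_ne')
    then show "continuous_on ({-1<..<1} \<times> {0..pi/2}) (\<lambda>(x, t). - (x * (sin t)\<^sup>2) / Dl x t)"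
      by (simp add: case_prod_unfold Dl_def)
  qed
  then show ?thesis by (simp add: ellEc_int[abs_def])
qed

lemma intg_Dl: "(\<lambda>t. Dl q t) integrable_on {a..b}"
  by (rule integrable_continuous_real) (auto intro: continuous_on_subset[OF cont_Dl])

lemma intg_invDl: "q\<^sup>2 < 1 \<Longrightarrow> (\<lambda>t. 1 / Dl q t) integrable_on {a..b}"
  by (rule integrable_continuous_real)
     (auto intro!: continuous_intros intro: continuous_on_subset[OF cont_Dl] simp: Dl_ne)

lemma intg_invDl3: "q\<^sup>2 < 1 \<Longrightarrow> (\<lambda>t. 1 / (Dl q t)^3) integrable_on {a..b}"
  by (rule integrable_continuous_real)
     (auto intro!: continuous_intros intro: continuous_on_subset[OF cont_Dl] simp: Dl_ne)

lemma int_inv3: assumes q: "q\<^sup>2 < 1" and q0: "q \<noteq> 0"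
  shows "integral {0..pi/2} (\<lambda>t. 1 / (Dl q t)^3) = ellEc q / (1 - q\<^sup>2)"
proof -
  define H where "H t = q\<^sup>2 * (sin t * cos t / Dl q t)" for t
  have dH: "(H has_real_derivative Dl q t - (1 - q\<^sup>2) / (Dl q t)^3) (at t)" for t
  proof -
    have ne: "Dl q t \<noteq> 0" by (rule Dl_ne[OF q])
    have "(H has_real_derivative q\<^sup>2 * (((cos t * cos t + sin t * - sin t) * Dl q t
        - sin t * cos t * (- (q\<^sup>2 * sin t * cos t) / Dl q t)) / (Dl q t * Dl q t))) (at t)"
      unfolding H_def
      by (rule derivative_eq_intros Dl_deriv_t[OF q] refl | simp add: ne)+
    moreover have "q\<^sup>2 * (((cos t * cos t + sin t * - sin t) * Dl q t
        - sin t * cos t * (- (q\<^sup>2 * sin t * cos t) / Dl q t)) / (Dl q t * Dl q t))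
        = Dl q t - (1 - q\<^sup>2) / (Dl q t)^3"
    proof -
      have D2: "(Dl q t)\<^sup>2 = 1 - q\<^sup>2 * (sin t)\<^sup>2" by (rule Dl_sq[OF q])
      have c2: "(cos t)\<^sup>2 = 1 - (sin t)\<^sup>2" by (simp add: cos_squared_eq)
      have "q\<^sup>2 * (((cos t * cos t + sin t * - sin t) * Dl q t
        - sin t * cos t * (- (q\<^sup>2 * sin t * cos t) / Dl q t)) / (Dl q t * Dl q t)) * (Dl q t)^3
        = q\<^sup>2 * ((cos t)\<^sup>2 - (sin t)\<^sup>2) * (Dl q t)\<^sup>2 + q\<^sup>2 * q\<^sup>2 * (sin t)\<^sup>2 * (cos t)\<^sup>2"
        using ne by (simp add: field_simps power2_eq_square power3_eq_cube)
      also have "\<dots> = ((Dl q t)\<^sup>2)\<^sup>2 - (1 - q\<^sup>2)"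
        unfolding D2 c2 by (simp add: algebra_simps power2_eq_square)
      also have "\<dots> = (Dl q t - (1 - q\<^sup>2) / (Dl q t)^3) * (Dl q t)^3"
        using ne by (simp add: field_simps power2_eq_square power3_eq_cube)
      finally have "q\<^sup>2 * (((cos t * cos t + sin t * - sin t) * Dl q t
        - sin t * cos t * (- (q\<^sup>2 * sin t * cos t) / Dl q t)) / (Dl q t * Dl q t)) * (Dl q t)^3 = (Dl q t - (1 - q\<^sup>2) / (Dl q t)^3) * (Dl q t)^3" .
      moreover have "(Dl q t)^3 \<noteq> 0" using ne by simp
      ultimately show ?thesis by (metis mult_right_cancel)
    qed
    ultimately show ?thesis by simp
  qed
  have "((\<lambda>t. Dl q t - (1 - q\<^sup>2) / (Dl q t)^3) has_integral (H (pi/2) - H 0)) {0..pi/2}"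
    by (rule ftc_at) (use dH in auto)
  moreover have "H (pi/2) - H 0 = 0" by (simp add: H_def)
  ultimately have "((\<lambda>t. Dl q t - (1 - q\<^sup>2) * (1 / (Dl q t)^3)) has_integral 0) {0..pi/2}"
    by simp
  moreover have "((\<lambda>t. Dl q t - (1 - q\<^sup>2) * (1 / (Dl q t)^3)) has_integral
      (ellEc q - (1 - q\<^sup>2) * integral {0..pi/2} (\<lambda>t. 1 / (Dl q t)^3))) {0..pi/2}"
    unfolding ellEc_int
    by (intro has_integral_diff has_integral_mult_right integrable_integral intg_Dl intg_invDl3 q)
  ultimately have "ellEc q - (1 - q\<^sup>2) * integral {0..pi/2} (\<lambda>t. 1 / (Dl q t)^3) = 0"
    using has_integral_unique by blast
  then show ?thesis using q by (simp add: field_simps)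
qed

lemma K_deriv: assumes q0: "0 < q" and q1: "q < 1"
  shows "(ellK has_real_derivative (ellEc q - (1 - q\<^sup>2) * ellK q) / (q * (1 - q\<^sup>2))) (at q)"
proof -
  have q: "q\<^sup>2 < 1" using q0 q1 by (simp add: power_less_one_iff abs_less_iff)
  have qU: "q \<in> {-1<..<1}" using q0 q1 by simp
  have pw: "q * (sin t)\<^sup>2 / (Dl q t)^3 = (1 / q) * (1 / (Dl q t)^3 - 1 / Dl q t)" for t
  proof -
    have ne: "Dl q t \<noteq> 0" by (rule Dl_ne[OF q])
    have "q\<^sup>2 * (sin t)\<^sup>2 = 1 - (Dl q t)\<^sup>2" using Dl_sq[OF q, of t] by simp
    then show ?thesis using ne q0
      by (simp add: field_simps power2_eq_square power3_eq_cube) 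
  qed
  have "((\<lambda>t. (1 / q) * (1 / (Dl q t)^3 - 1 / Dl q t)) has_integral
      (1 / q) * (ellEc q / (1 - q\<^sup>2) - ellK q)) {0..pi/2}"
  proof -
    have I3: "((\<lambda>t. 1 / (Dl q t)^3) has_integral ellEc q / (1 - q\<^sup>2)) {0..pi/2}"
      using integrable_integral[OF intg_invDl3[OF q], of 0 "pi/2"] int_inv3[OF q] q0 by simp
    show ?thesis unfolding ellK_int
      by (intro has_integral_mult_right has_integral_diff integrable_integral intg_invDl I3 q)
  qed
  then have "integral {0..pi/2} (\<lambda>t. q * (sin t)\<^sup>2 / (Dl q t)^3) = (1 / q) * (ellEc q / (1 - q\<^sup>2) - ellK q)"
    unfolding pw by (rule integral_unique)
  also have "\<dots> = (ellEc q - (1 - q\<^sup>2) * ellK q) / (q * (1 - q\<^sup>2))"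
    using q q0 by (simp add: field_simps)
  finally show ?thesis using K_deriv_int[OF qU] by simp
qed

lemma E_deriv: assumes q0: "0 < q" and q1: "q < 1"
  shows "(ellEc has_real_derivative (ellEc q - ellK q) / q) (at q)"
proof -
  have q: "q\<^sup>2 < 1" using q0 q1 by (simp add: power_less_one_iff abs_less_iff)
  have qU: "q \<in> {-1<..<1}" using q0 q1 by simp
  have pw: "- (q * (sin t)\<^sup>2) / Dl q t = (1 / q) * (Dl q t - 1 / Dl q t)" for t
  proof -
    have ne: "Dl q t \<noteq> 0" by (rule Dl_ne[OF q])
    have "q\<^sup>2 * (sin t)\<^sup>2 = 1 - (Dl q t)\<^sup>2" using Dl_sq[OF q, of t] by simp
    then show ?thesis using ne q0
      by (simp add: field_simps power2_eq_square) 
  qed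
  have "((\<lambda>t. (1 / q) * (Dl q t - 1 / Dl q t)) has_integral
      (1 / q) * (ellEc q - ellK q)) {0..pi/2}"
    unfolding ellK_int ellEc_int
    by (intro has_integral_mult_right has_integral_diff integrable_integral intg_invDl intg_Dl q) 
  then have "integral {0..pi/2} (\<lambda>t. - (q * (sin t)\<^sup>2) / Dl q t) = (1 / q) * (ellEc q - ellK q)"
    unfolding pw by (rule integral_unique)
  then show ?thesis using E_deriv_int[OF qU] by simp
qed

lemma q_sq_lt1: "0 < (q::real) \<Longrightarrow> q < 1 \<Longrightarrow> q\<^sup>2 < 1"
  by (simp add: power_less_one_iff abs_less_iff)

lemma Dl_ge: "q\<^sup>2 < 1 \<Longrightarrow> 1 - q\<^sup>2 \<le> Dl q t"
proof -
  assume q: "q\<^sup>2 < 1"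
  have "(Dl q t)\<^sup>2 \<le> Dl q t" using Dl_le1[OF q, of t] Dl_pos[OF q, of t]
    by (simp add: power2_eq_square mult_left_le)
  moreover have "(sin t)\<^sup>2 \<le> 1" using abs_sin_le_one[of t] abs_square_le_1 by blast
  then have "q\<^sup>2 * (sin t)\<^sup>2 \<le> q\<^sup>2" by (simp add: mult_left_le)
  ultimately show ?thesis using Dl_sq[OF q, of t] by linarith
qed

lemma Ec_pos: "q\<^sup>2 < 1 \<Longrightarrow> 0 < ellEc q"
proof -
  assume q: "q\<^sup>2 < 1"
  have "integral {0..pi/2} (\<lambda>t. 1 - q\<^sup>2) \<le> integral {0..pi/2} (\<lambda>t. Dl q t)"
    by (rule integral_le) (auto intro: intg_Dl Dl_ge[OF q])
  moreover have "integral {0..pi/2} (\<lambda>t. 1 - q\<^sup>2) = pi/2 * (1 - q\<^sup>2)" by simp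
  moreover have "0 < pi/2 * (1 - q\<^sup>2)" using q by simp
  ultimately show ?thesis by (simp add: ellEc_int)
qed

lemma Ec_le_K: "q\<^sup>2 < 1 \<Longrightarrow> ellEc q \<le> ellK q"
proof -
  assume q: "q\<^sup>2 < 1"
  have "Dl q t \<le> 1 / Dl q t" for t
    using Dl_le1[OF q, of t] Dl_pos[OF q, of t] by (simp add: field_simps power2_eq_square mult_le_one)
  then show ?thesis unfolding ellK_int ellEc_int
    by (intro integral_le intg_Dl intg_invDl q) auto
qed

lemma Ec_le: "q\<^sup>2 < 1 \<Longrightarrow> ellEc q \<le> pi/2"
proof -
  assume q: "q\<^sup>2 < 1"
  have "integral {0..pi/2} (\<lambda>t. Dl q t) \<le> integral {0..pi/2} (\<lambda>t. 1)"
    by (rule integral_le) (auto intro: intg_Dl Dl_le1[OF q])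
  then show ?thesis by (simp add: ellEc_int)
qed

definition DD :: "real \<Rightarrow> real" where "DD q = 2 * ellEc q - ellK q"

lemma DD_deriv: assumes "0 < q" "q < 1"
  shows "(DD has_real_derivative ((1 - 2 * q\<^sup>2) * ellEc q - (1 - q\<^sup>2) * ellK q) / (q * (1 - q\<^sup>2))) (at q)"
proof -
  have "(DD has_real_derivative 2 * ((ellEc q - ellK q) / q) - (ellEc q - (1 - q\<^sup>2) * ellK q) / (q * (1 - q\<^sup>2))) (at q)"
    unfolding DD_def[abs_def] by (intro DERIV_diff DERIV_cmult E_deriv K_deriv assms)
  moreover have "2 * ((ellEc q - ellK q) / q) - (ellEc q - (1 - q\<^sup>2) * ellK q) / (q * (1 - q\<^sup>2))
      = ((1 - 2 * q\<^sup>2) * ellEc q - (1 - q\<^sup>2) * ellK q) / (q * (1 - q\<^sup>2))"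
    using assms q_sq_lt1[OF assms] by (simp add: field_simps)
  ultimately show ?thesis by simp
qed

lemma DD_deriv_neg: assumes "0 < q" "q < 1"
  shows "((1 - 2 * q\<^sup>2) * ellEc q - (1 - q\<^sup>2) * ellK q) / (q * (1 - q\<^sup>2)) < 0"
proof -
  have q: "q\<^sup>2 < 1" using q_sq_lt1[OF assms] .
  have K: "0 < ellK q" using ellK_pos[OF q] .
  have E: "0 < ellEc q" using Ec_pos[OF q] .
  have EK: "ellEc q \<le> ellK q" using Ec_le_K[OF q] .
  have qq: "0 < q\<^sup>2" using assms by simp
  have "(1 - 2 * q\<^sup>2) * ellEc q < (1 - q\<^sup>2) * ellK q"
  proof (cases "1 - 2 * q\<^sup>2 \<ge> 0")
    case True
    then have "(1 - 2 * q\<^sup>2) * ellEc q \<le> (1 - 2 * q\<^sup>2) * ellK q" using EK by (simp add: mult_left_mono)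
    also have "\<dots> < (1 - q\<^sup>2) * ellK q" using K qq by (simp add: mult_strict_right_mono)
    finally show ?thesis .
  next
    case False
    then have "(1 - 2 * q\<^sup>2) * ellEc q < 0" using E by (simp add: mult_neg_pos)
    also have "0 < (1 - q\<^sup>2) * ellK q" using K q by simp
    finally show ?thesis .
  qed
  moreover have "0 < q * (1 - q\<^sup>2)" using assms q by simp
  ultimately show ?thesis by (simp add: divide_neg_pos)
qed

lemma DD_isCont: "0 < q \<Longrightarrow> q < 1 \<Longrightarrow> isCont DD q"
  using DD_deriv DERIV_isCont by blast

lemma DD_cont_on: "0 < a \<Longrightarrow> b < 1 \<Longrightarrow> continuous_on {a..b} DD"
  by (intro continuous_at_imp_continuous_on ballI DD_isCont) auto

lemma DD_strict_dec: "0 < a \<Longrightarrow> a < b \<Longrightarrow> b < 1 \<Longrightarrow> DD b < DD a"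
  by (rule DERIV_neg_imp_decreasing[where f=DD]) (auto intro!: exI DD_deriv DD_deriv_neg)

lemma intg_cmul: "f integrable_on S \<Longrightarrow> (\<lambda>x. (c::real) * f x) integrable_on S"
  using integrable_on_cmult_left[of f S c] by simp

lemma r2_sq: "(1 / sqrt 2 :: real)\<^sup>2 = 1/2"
  by (simp add: power_divide)

lemma r2_pos: "0 < (1 / sqrt 2 :: real)" by simp
lemma r2_lt1: "(1 / sqrt 2 :: real) < 1" by (simp add: field_simps)

lemma int_cos2: "integral {0..pi/2} (\<lambda>t. (cos t)\<^sup>2) = pi / 4"
proof -
  have "((\<lambda>t. (cos t)\<^sup>2) has_integral ((pi/2 + sin (pi/2) * cos (pi/2)) / 2 - (0 + sin 0 * cos 0) / 2)) {0..pi/2}"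
  proof (rule ftc_at)
    fix x :: real
    have "((\<lambda>t. (t + sin t * cos t) / 2) has_real_derivative (1 + (cos x * cos x + sin x * - sin x)) / 2) (at x)"
      by (auto intro!: derivative_eq_intros)
    moreover have "(1 + (cos x * cos x + sin x * - sin x)) / 2 = (cos x)\<^sup>2"
      using sin_cos_squared_add[of x] by (simp add: power2_eq_square field_simps)
    ultimately show "((\<lambda>t. (t + sin t * cos t) / 2) has_real_derivative (cos x)\<^sup>2) (at x)" by simp
  qed simp
  then show ?thesis by (simp add: integral_unique)
qed

lemma DD_r2: "pi / 4 \<le> DD (1 / sqrt 2)"
proof -
  define q :: real where "q = 1 / sqrt 2"
  have q2: "q\<^sup>2 = 1/2" by (simp add: q_def r2_sq)
  have q: "q\<^sup>2 < 1" by (simp add: q2)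
  have pw: "(cos t)\<^sup>2 \<le> 2 * Dl q t - 1 / Dl q t" for t
  proof -
    have ne: "0 < Dl q t" by (rule Dl_pos[OF q])
    have "2 * Dl q t - 1 / Dl q t = (2 * (Dl q t)\<^sup>2 - 1) / Dl q t" using ne by (simp add: field_simps power2_eq_square)
    also have "\<dots> = (cos t)\<^sup>2 / Dl q t" using Dl_sq[OF q, of t] q2 by (simp add: cos_squared_eq)
    also have "\<dots> \<ge> (cos t)\<^sup>2" using ne Dl_le1[OF q, of t] by (simp add: le_divide_eq mult_left_le)
    finally show ?thesis .
  qed
  have "integral {0..pi/2} (\<lambda>t. (cos t)\<^sup>2) \<le> integral {0..pi/2} (\<lambda>t. 2 * Dl q t - 1 / Dl q t)"
  proof (rule integral_le)
    show "(\<lambda>t. (cos t)\<^sup>2) integrable_on {0..pi/2}"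
      by (intro integrable_continuous_real continuous_intros)
    show "(\<lambda>t. 2 * Dl q t - 1 / Dl q t) integrable_on {0..pi/2}"
      by (intro integrable_diff intg_cmul intg_Dl intg_invDl q)
  qed (rule pw)
  also have "\<dots> = DD q" unfolding DD_def ellK_int ellEc_int
    by (subst integral_diff) (auto intro: intg_cmul intg_Dl intg_invDl q)
  finally show ?thesis using int_cos2 q_def by simp
qed

lemma K_big: assumes e0: "0 < e" and e1: "e < 1"
  shows "ln (pi/2 + e) - ln e \<le> ellK (sqrt (1 - e\<^sup>2))"
proof -
  define q where "q = sqrt (1 - e\<^sup>2)"
  have e2: "e\<^sup>2 < 1" using e0 e1 by (simp add: power_less_one_iff)
  have q2: "q\<^sup>2 = 1 - e\<^sup>2" using e2 by (simp add: q_def)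
  have q: "q\<^sup>2 < 1" using q2 e0 by simp
  have pw: "1 / (pi/2 + e - t) \<le> 1 / Dl q t" if t: "t \<in> {0..pi/2}" for t
  proof -
    have c0: "0 \<le> cos t" using t by (intro cos_ge_zero) auto
    have "(Dl q t)\<^sup>2 = (cos t)\<^sup>2 + e\<^sup>2 * (sin t)\<^sup>2"
      using Dl_sq[OF q, of t] q2 by (simp add: cos_squared_eq algebra_simps)
    also have "\<dots> \<le> (cos t)\<^sup>2 + e\<^sup>2"
    proof -
      have "(sin t)\<^sup>2 \<le> 1" using abs_sin_le_one[of t] abs_square_le_1 by blast
      then have "e\<^sup>2 * (sin t)\<^sup>2 \<le> e\<^sup>2" by (simp add: mult_left_le)
      then show ?thesis by simp
    qed
    also have "\<dots> \<le> (cos t + e)\<^sup>2" using c0 e0 by (simp add: power2_eq_square algebra_simps)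
    finally have "Dl q t \<le> cos t + e"
      using Dl_pos[OF q, of t] c0 e0 by (simp add: power_mono_iff[symmetric] abs_le_square_iff[symmetric])
    also have "cos t = sin (pi/2 - t)" by (simp add: sin_cos_eq)
    also have "sin (pi/2 - t) \<le> pi/2 - t" using t by (intro sin_x_le_x) auto
    finally have "Dl q t \<le> pi/2 + e - t" by simp
    then show ?thesis using Dl_pos[OF q, of t] by (simp add: frac_le)
  qed
  have "((\<lambda>t. 1 / (pi/2 + e - t)) has_integral (- ln (pi/2 + e - pi/2) - - ln (pi/2 + e - 0))) {0..pi/2}"
  proof (rule ftc_at)
    fix x :: real assume x: "0 \<le> x" "x \<le> pi/2"
    have "((\<lambda>t. - ln (pi/2 + e - t)) has_real_derivative - ((0 - 1) / (pi/2 + e - x))) (at x)"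
      using x e0 by (auto intro!: derivative_eq_intros)
    then show "((\<lambda>t. - ln (pi/2 + e - t)) has_real_derivative 1 / (pi/2 + e - x)) (at x)" by simp
  qed simp
  then have "integral {0..pi/2} (\<lambda>t. 1 / (pi/2 + e - t)) = ln (pi/2 + e) - ln e"
    by (simp add: integral_unique)
  moreover have "integral {0..pi/2} (\<lambda>t. 1 / (pi/2 + e - t)) \<le> integral {0..pi/2} (\<lambda>t. 1 / Dl q t)"
  proof (rule integral_le)
    show "(\<lambda>t. 1 / (pi/2 + e - t)) integrable_on {0..pi/2}"
      using \<open>((\<lambda>t. 1 / (pi/2 + e - t)) has_integral _) _\<close> by blast
  qed (auto intro: intg_invDl[OF q] pw)
  ultimately show ?thesis by (simp add: ellK_int q_def)
qed

lemma DD_neg_ex: "\<exists>q. 1 / sqrt 2 < q \<and> q < 1 \<and> DD q < 0"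
proof -
  define e :: real where "e = 1/10000"
  define q where "q = sqrt (1 - e\<^sup>2)"
  have e2: "e\<^sup>2 < 1" by (simp add: e_def power2_eq_square)
  have q2: "q\<^sup>2 = 1 - e\<^sup>2" using e2 by (simp add: q_def)
  have q: "q\<^sup>2 < 1" using q2 by (simp add: e_def)
  have qpos: "0 < q" using e2 by (simp add: q_def)
  have qlt: "q < 1" using q qpos by (simp add: power_less_one_iff)
  have "(1 / sqrt 2)\<^sup>2 < q\<^sup>2" using q2 by (simp add: r2_sq e_def power2_eq_square)
  then have qgt: "1 / sqrt 2 < q" using qpos by (simp add: power_less_imp_less_base)
  have "ln (2 ^ 13) \<le> ln (pi/2 + e) - ln e"
  proof -
    have "ln ((pi/2 + e) / e) = ln (pi/2 + e) - ln e"
      by (rule ln_divide_pos) (use pi_gt_zero in \<open>auto simp: e_def intro: add_pos_pos\<close>)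
    moreover have "(2::real) ^ 13 \<le> (pi/2 + e) / e" using pi_gt3 by (simp add: e_def field_simps)
    ultimately show ?thesis by (metis ln_le_cancel_iff zero_less_numeral zero_less_power less_le_trans)
  qed
  moreover have "ln ((2::real) ^ 13) = 13 * ln 2" using ln_realpow[of 2 13] by simp
  moreover have "2/3 \<le> ln (2::real)" by (rule ln2_ge_two_thirds)
  ultimately have "8 \<le> ellK q" using K_big[of e] by (simp add: e_def q_def)
  moreover have "ellEc q \<le> pi/2" by (rule Ec_le[OF q])
  ultimately have "DD q < 0" using pi_less_4 by (simp add: DD_def)
  then show ?thesis using qgt qlt by blast
qed

lemma q_star_props: "1 / sqrt 2 < q_star \<and> q_star < 1 \<and> DD q_star = 0"
proof -
  obtain b where b: "1 / sqrt 2 < b" "b < 1" "DD b < 0" using DD_neg_ex by blast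
  have a: "0 < DD (1 / sqrt 2)" using DD_r2 pi_gt_zero by linarith
  obtain z where z: "1 / sqrt 2 \<le> z" "z \<le> b" "DD z = 0"
    using IVT2'[of DD b 0 "1 / sqrt 2"] b a DD_cont_on[OF r2_pos b(2)] by force
  have z1: "1 / sqrt 2 < z" using z a by (cases "z = 1 / sqrt 2") auto
  have zz: "z < 1" using z b by simp
  have uniq: "y = z" if "0 < y" "y < 1" "DD y = 0" for y
  proof (rule ccontr)
    assume "y \<noteq> z"
    then consider "y < z" | "z < y" by linarith
    then show False
    proof cases
      case 1 then show False using DD_strict_dec[of y z] that z zz by simp
    next
      case 2 then show False using DD_strict_dec[of z y] that z z1 r2_pos by simp
    qed
  qed
  have "q_star = z"
    unfolding q_star_def
  proof (rule the_equality)
    have "0 < z" using z1 r2_pos by linarith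
    then show "0 < z \<and> z < 1 \<and> 2 * ellEc z - ellK z = 0" using z zz DD_def by auto
  next
    fix y assume "0 < y \<and> y < 1 \<and> 2 * ellEc y - ellK y = 0"
    then show "y = z" using uniq DD_def by auto
  qed
  then show ?thesis using z1 zz z by simp
qed

lemma DD_pos_iff: "0 < q \<Longrightarrow> q < 1 \<Longrightarrow> 0 < DD q \<longleftrightarrow> q < q_star"
proof -
  assume q: "0 < q" "q < 1"
  have s: "0 < q_star" "q_star < 1" "DD q_star = 0" using q_star_props r2_pos by linarith+
  show ?thesis
  proof
    assume "0 < DD q"
    then show "q < q_star"
    proof (cases "q_star < q")
      case True then show ?thesis using DD_strict_dec[of q_star q] s q \<open>0 < DD q\<close> by simp
    next
      case False then show ?thesis using s \<open>0 < DD q\<close> by (cases "q = q_star") auto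
    qed
  next
    assume "q < q_star"
    then show "0 < DD q" using DD_strict_dec[of q q_star] s q by simp
  qed
qed

lemma f_deriv: assumes q0: "0 < q" and q1: "q < 1"
  shows "(f_aux has_real_derivative q * ((20 * q\<^sup>2 - 13) * ellK q + 20 * (1 - 2 * q\<^sup>2) * ellEc q)) (at q)"
proof -
  have q: "q\<^sup>2 < 1" using q_sq_lt1[OF q0 q1] .
  define K E where "K = ellK q" and "E = ellEc q"
  have "(f_aux has_real_derivative
      (16 * q^3 - 10 * q) * K + (4*q^4 - 5*q\<^sup>2 + 1) * ((E - (1 - q\<^sup>2) * K) / (q * (1 - q\<^sup>2)))
      + ((-32 * q^3 + 16 * q) * E + (-8*q^4 + 8*q\<^sup>2 - 1) * ((E - K) / q))) (at q)"
    unfolding f_aux_def[abs_def] K_def E_def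
    by (rule derivative_eq_intros K_deriv[OF q0 q1] E_deriv[OF q0 q1] refl | simp add: algebra_simps)+
  moreover have "(16 * q^3 - 10 * q) * K + (4*q^4 - 5*q\<^sup>2 + 1) * ((E - (1 - q\<^sup>2) * K) / (q * (1 - q\<^sup>2)))
      + ((-32 * q^3 + 16 * q) * E + (-8*q^4 + 8*q\<^sup>2 - 1) * ((E - K) / q))
      = q * ((20 * q\<^sup>2 - 13) * K + 20 * (1 - 2 * q\<^sup>2) * E)"
  proof -
    have "1 - q\<^sup>2 \<noteq> 0" using q by simp
    have "4*q^4 - 5*q\<^sup>2 + 1 = (1 - q\<^sup>2) * (1 - 4 * q\<^sup>2)" by algebra
    then have "(4*q^4 - 5*q\<^sup>2 + 1) * ((E - (1 - q\<^sup>2) * K) / (q * (1 - q\<^sup>2))) = (1 - 4 * q\<^sup>2) * (E - (1 - q\<^sup>2) * K) / q"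
      using \<open>1 - q\<^sup>2 \<noteq> 0\<close> q0 by (simp add: field_simps)
    then show ?thesis using q0 by (simp add: field_simps) algebra
  qed
  ultimately show ?thesis by (simp add: K_def E_def)
qed

lemma g_deriv: assumes q0: "0 < q" and q1: "q < 1"
  shows "(g_aux has_real_derivative 16 * DD q * f_aux q / (q * (1 - q\<^sup>2))) (at q)"
proof -
  have q: "q\<^sup>2 < 1" using q_sq_lt1[OF q0 q1] .
  define K E where "K = ellK q" and "E = ellEc q"
  have "(g_aux has_real_derivative
      8 * (2 * (2 * E - K) * (2 * ((E - K) / q) - (E - (1 - q\<^sup>2) * K) / (q * (1 - q\<^sup>2)))) * (2 * q\<^sup>2 - 1)
      + 8 * (2 * E - K)\<^sup>2 * (4 * q)) (at q)"
    unfolding g_aux_def[abs_def] K_def E_def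
    by (rule derivative_eq_intros K_deriv[OF q0 q1] E_deriv[OF q0 q1] refl | simp add: algebra_simps)+
  moreover have "8 * (2 * (2 * E - K) * (2 * ((E - K) / q) - (E - (1 - q\<^sup>2) * K) / (q * (1 - q\<^sup>2)))) * (2 * q\<^sup>2 - 1)
      + 8 * (2 * E - K)\<^sup>2 * (4 * q) = 16 * DD q * f_aux q / (q * (1 - q\<^sup>2))"
  proof -
    have ne: "1 - q\<^sup>2 \<noteq> 0" using q by simp
    show ?thesis unfolding DD_def f_aux_def K_def[symmetric] E_def[symmetric]
      using ne q0 by (simp add: field_simps) algebra
  qed
  ultimately show ?thesis by simp
qed

definition hh :: "real \<Rightarrow> real \<Rightarrow> real" where
  "hh c q = 16 * DD q * (ellEc q - (1 - q\<^sup>2) * ellK q) + c * ellK q / DD q"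

lemma A_deriv: assumes q0: "0 < q" and q1: "q < 1"
  shows "((\<lambda>q. ellEc q - (1 - q\<^sup>2) * ellK q) has_real_derivative q * ellK q) (at q)"
proof -
  have q: "q\<^sup>2 < 1" using q_sq_lt1[OF q0 q1] .
  have "((\<lambda>q. ellEc q - (1 - q\<^sup>2) * ellK q) has_real_derivative
     (ellEc q - ellK q) / q - ((- (2 * q)) * ellK q + (ellEc q - (1 - q\<^sup>2) * ellK q) / (q * (1 - q\<^sup>2)) * (1 - q\<^sup>2))) (at q)"
  proof (rule DERIV_diff[OF E_deriv[OF q0 q1]])
    have "((\<lambda>q. 1 - q\<^sup>2) has_real_derivative - (2 * q)) (at q)"
      by (auto intro!: derivative_eq_intros)
    from DERIV_mult[OF this K_deriv[OF q0 q1]]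
    show "((\<lambda>q. (1 - q\<^sup>2) * ellK q) has_real_derivative (- (2 * q)) * ellK q + (ellEc q - (1 - q\<^sup>2) * ellK q) / (q * (1 - q\<^sup>2)) * (1 - q\<^sup>2)) (at q)" .
  qed
  moreover have "(ellEc q - ellK q) / q - ((- (2 * q)) * ellK q + (ellEc q - (1 - q\<^sup>2) * ellK q) / (q * (1 - q\<^sup>2)) * (1 - q\<^sup>2)) = q * ellK q"
    using q q0 by (simp add: field_simps power2_eq_square)
  ultimately show ?thesis by metis
qed


lemma frac_helper: "(x::real) \<noteq> 0 \<Longrightarrow> d \<noteq> 0 \<Longrightarrow> P / x + Q / (x * d) = (P * d + Q) / (x * d)"
  by (simp add: field_simps)

lemma h_alg: fixes E K q c D :: real
  assumes D: "D = 2 * E - K" and q0: "q \<noteq> 0" and q1: "1 - q\<^sup>2 \<noteq> 0" and D0: "D \<noteq> 0"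
  shows "(16 * (((1 - 2 * q\<^sup>2) * E - (1 - q\<^sup>2) * K) / (q * (1 - q\<^sup>2))) * (E - (1 - q\<^sup>2) * K) + q * K * (16 * D))
     + (c * ((E - (1 - q\<^sup>2) * K) / (q * (1 - q\<^sup>2))) * D - (((1 - 2 * q\<^sup>2) * E - (1 - q\<^sup>2) * K) / (q * (1 - q\<^sup>2))) * (c * K)) / (D\<^sup>2)
   = 2 * (E\<^sup>2 - 2 * (1 - q\<^sup>2) * E * K + (1 - q\<^sup>2) * K\<^sup>2) * (c - 8 * D\<^sup>2 * (2 * q\<^sup>2 - 1)) / (q * (1 - q\<^sup>2) * D\<^sup>2)"
proof -
  define m where "m = 1 - q\<^sup>2"
  define X where "X = (1 - 2 * q\<^sup>2) * E - (1 - q\<^sup>2) * K"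
  define A where "A = E - (1 - q\<^sup>2) * K"
  have m0: "m \<noteq> 0" using q1 by (simp add: m_def)
  have a: "16 * (X / (q * m)) * A + q * K * (16 * D) = (16 * X * A + q * q * m * K * (16 * D)) / (q * m)"
    using q0 m0 by (simp add: field_simps)
  have b: "(c * (A / (q * m)) * D - (X / (q * m)) * (c * K)) / (D\<^sup>2) = (c * A * D - X * (c * K)) / (q * m * D\<^sup>2)"
    using q0 m0 D0 by (simp add: field_simps)
  have "(16 * (((1 - 2 * q\<^sup>2) * E - (1 - q\<^sup>2) * K) / (q * (1 - q\<^sup>2))) * (E - (1 - q\<^sup>2) * K) + q * K * (16 * D))
     + (c * ((E - (1 - q\<^sup>2) * K) / (q * (1 - q\<^sup>2))) * D - (((1 - 2 * q\<^sup>2) * E - (1 - q\<^sup>2) * K) / (q * (1 - q\<^sup>2))) * (c * K)) / (D\<^sup>2)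
     = (16 * (((1 - 2 * q\<^sup>2) * E - (1 - q\<^sup>2) * K)) * (E - (1 - q\<^sup>2) * K) + q * q * (1 - q\<^sup>2) * K * (16 * D)) / (q * (1 - q\<^sup>2))
     + (c * (E - (1 - q\<^sup>2) * K) * D - ((1 - 2 * q\<^sup>2) * E - (1 - q\<^sup>2) * K) * (c * K)) / (q * (1 - q\<^sup>2) * D\<^sup>2)"
    using a b unfolding m_def X_def A_def by simp
  also have "\<dots> = ((16 * (((1 - 2 * q\<^sup>2) * E - (1 - q\<^sup>2) * K)) * (E - (1 - q\<^sup>2) * K) + q * q * (1 - q\<^sup>2) * K * (16 * D)) * D\<^sup>2
     + (c * (E - (1 - q\<^sup>2) * K) * D - ((1 - 2 * q\<^sup>2) * E - (1 - q\<^sup>2) * K) * (c * K))) / (q * (1 - q\<^sup>2) * D\<^sup>2)"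
    by (rule frac_helper) (use q0 q1 D0 in auto)
  also have "((16 * (((1 - 2 * q\<^sup>2) * E - (1 - q\<^sup>2) * K)) * (E - (1 - q\<^sup>2) * K) + q * q * (1 - q\<^sup>2) * K * (16 * D)) * D\<^sup>2
     + (c * (E - (1 - q\<^sup>2) * K) * D - ((1 - 2 * q\<^sup>2) * E - (1 - q\<^sup>2) * K) * (c * K)))
     = 2 * (E\<^sup>2 - 2 * (1 - q\<^sup>2) * E * K + (1 - q\<^sup>2) * K\<^sup>2) * (c - 8 * D\<^sup>2 * (2 * q\<^sup>2 - 1))"
    unfolding D by algebra
  finally show ?thesis .
qed

lemma h_deriv: assumes q0: "0 < q" and q1: "q < 1" and D: "DD q \<noteq> 0"
  shows "(hh c has_real_derivative
     2 * ((ellEc q)\<^sup>2 - 2 * (1 - q\<^sup>2) * ellEc q * ellK q + (1 - q\<^sup>2) * (ellK q)\<^sup>2) * (c - g_aux q)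
       / (q * (1 - q\<^sup>2) * (DD q)\<^sup>2)) (at q)"
proof -
  have q: "q\<^sup>2 < 1" using q_sq_lt1[OF q0 q1] .
  define K E where "K = ellK q" and "E = ellEc q"
  define K' D' where "K' = (E - (1 - q\<^sup>2) * K) / (q * (1 - q\<^sup>2))" 
    and "D' = ((1 - 2 * q\<^sup>2) * E - (1 - q\<^sup>2) * K) / (q * (1 - q\<^sup>2))"
  have dD: "(DD has_real_derivative D') (at q)" unfolding D'_def E_def K_def by (rule DD_deriv[OF q0 q1])
  have dK: "(ellK has_real_derivative K') (at q)" unfolding K'_def E_def K_def by (rule K_deriv[OF q0 q1])
  have dA: "((\<lambda>q. ellEc q - (1 - q\<^sup>2) * ellK q) has_real_derivative q * K) (at q)"
    unfolding K_def by (rule A_deriv[OF q0 q1])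
  have dh: "((\<lambda>q. 16 * DD q * (ellEc q - (1 - q\<^sup>2) * ellK q) + c * ellK q / DD q) has_real_derivative
      (16 * D' * (E - (1 - q\<^sup>2) * K) + q * K * (16 * DD q)) + (c * K' * DD q - D' * (c * K)) / ((DD q)\<^sup>2)) (at q)"
  proof (rule DERIV_add)
    show "((\<lambda>q. 16 * DD q * (ellEc q - (1 - q\<^sup>2) * ellK q)) has_real_derivative
        16 * D' * (E - (1 - q\<^sup>2) * K) + q * K * (16 * DD q)) (at q)"
      using DERIV_mult[OF DERIV_cmult[OF dD, of 16] dA] by (simp add: E_def K_def)
    show "((\<lambda>q. c * ellK q / DD q) has_real_derivative (c * K' * DD q - D' * (c * K)) / ((DD q)\<^sup>2)) (at q)"
      using DERIV_quotient[OF DERIV_cmult[OF dK, of c] dD D] by (simp add: K_def power2_eq_square)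
  qed
  have gD: "g_aux q = 8 * (DD q)\<^sup>2 * (2 * q\<^sup>2 - 1)" by (simp add: g_aux_def DD_def)
  have eq: "(16 * D' * (E - (1 - q\<^sup>2) * K) + q * K * (16 * DD q)) + (c * K' * DD q - D' * (c * K)) / ((DD q)\<^sup>2)
      = 2 * (E\<^sup>2 - 2 * (1 - q\<^sup>2) * E * K + (1 - q\<^sup>2) * K\<^sup>2) * (c - g_aux q)
       / (q * (1 - q\<^sup>2) * (DD q)\<^sup>2)"
    unfolding gD K'_def D'_def
    by (rule h_alg) (use q q0 D in \<open>auto simp: DD_def E_def K_def\<close>)
  from dh[unfolded eq] show ?thesis unfolding K_def E_def hh_def[abs_def] .
qed

lemma no_later_zero:
  fixes F F' :: "real \<Rightarrow> real"
  assumes der: "\<And>x. a \<le> x \<Longrightarrow> x < b \<Longrightarrow> (F has_real_derivative F' x) (at x)"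
    and tr: "\<And>x. a \<le> x \<Longrightarrow> x < b \<Longrightarrow> F x = 0 \<Longrightarrow> F' x < 0"
    and z: "a \<le> z" "F z = 0" "z < y" "y < b"
  shows "F y < 0"
proof (rule ccontr)
  assume "\<not> F y < 0"
  then have Fy: "0 \<le> F y" by simp
  have cont: "continuous_on {s..t} F" if "a \<le> s" "t < b" for s t
  proof (intro continuous_at_imp_continuous_on ballI)
    fix x assume "x \<in> {s..t}"
    then have "(F has_real_derivative F' x) (at x)" using der that by auto
    then show "isCont F x" by (rule DERIV_isCont)
  qed
  obtain d where d: "d > 0" "\<And>h. h > 0 \<Longrightarrow> h < d \<Longrightarrow> F (z + h) < F z"
    using DERIV_neg_dec_right[OF der[OF z(1)] tr[OF z(1) _ z(2)]] z by force
  define \<delta> where "\<delta> = min (d/2) ((y - z)/2)"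
  have \<delta>: "0 < \<delta>" "\<delta> < d" "z + \<delta> < y"
  proof -
    have "\<delta> \<le> (y - z)/2" "\<delta> \<le> d/2" unfolding \<delta>_def by (rule min.cobounded2, rule min.cobounded1)
    moreover have "0 < \<delta>" using d z by (simp add: \<delta>_def)
    ultimately show "0 < \<delta>" "\<delta> < d" using d z by linarith+
    have "(y - z)/2 < y - z" using z by simp
    then show "z + \<delta> < y" using \<open>\<delta> \<le> (y - z)/2\<close> by linarith
  qed
  have F\<delta>: "F (z + \<delta>) < 0" using d(2)[OF \<delta>(1,2)] z by simp
  define Z where "Z = {z + \<delta>..y} \<inter> F -` {0}"
  have Zc: "closed Z" unfolding Z_def
    by (rule continuous_closed_preimage) (use cont z \<delta> in auto)
  have cy: "continuous_on {z + \<delta>..y} F" using cont z \<delta> by simp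
  have "\<exists>x\<ge>z + \<delta>. x \<le> y \<and> F x = 0"
    by (rule IVT'[OF _ _ _ cy]) (use F\<delta> Fy \<delta> in auto)
  then obtain y0 where y0: "z + \<delta> \<le> y0" "y0 \<le> y" "F y0 = 0" by blast
  have Zne: "Z \<noteq> {}" using y0 by (auto simp: Z_def)
  have Zb: "bdd_below Z" unfolding Z_def by (rule bdd_belowI[of _ "z + \<delta>"]) auto
  define w where "w = Inf Z"
  have wZ: "w \<in> Z" unfolding w_def by (rule closed_contains_Inf[OF Zne Zb Zc])
  then have w: "z + \<delta> \<le> w" "w \<le> y" "F w = 0" by (auto simp: Z_def)
  have wgt: "z + \<delta> < w" using w F\<delta> by (cases "w = z + \<delta>") auto
  have neg: "F t < 0" if t: "z + \<delta> \<le> t" "t < w" for t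
  proof (rule ccontr)
    assume "\<not> F t < 0"
    have ct: "continuous_on {z + \<delta>..t} F" using cont[of "z + \<delta>" t] z \<delta> w t by simp
    have "\<exists>x\<ge>z + \<delta>. x \<le> t \<and> F x = 0"
      by (rule IVT'[OF _ _ _ ct]) (use F\<delta> t \<open>\<not> F t < 0\<close> in auto)
    then obtain u where u: "z + \<delta> \<le> u" "u \<le> t" "F u = 0" by blast
    then have "u \<in> Z" using t w by (auto simp: Z_def)
    then have "w \<le> u" unfolding w_def using Zb by (simp add: cInf_lower)
    then show False using u t by simp
  qed
  obtain e where e: "e > 0" "\<And>h. h > 0 \<Longrightarrow> h < e \<Longrightarrow> F w < F (w - h)"
  proof -
    have aw: "a \<le> w" "w < b" using w z \<delta> by linarith+
    show ?thesis using DERIV_neg_dec_left[OF der[OF aw] tr[OF aw w(3)]] that w(3) by auto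
  qed
  define h where "h = min (e/2) ((w - (z + \<delta>))/2)"
  have h1: "h \<le> e/2" "h \<le> (w - (z + \<delta>))/2" unfolding h_def by (rule min.cobounded1, rule min.cobounded2)
  have h2: "0 < h" using e wgt by (simp add: h_def)
  have h3: "h < e" using h1 e by linarith
  have h4: "z + \<delta> \<le> w - h" using h1(2) wgt by (simp add: field_simps)
  have h: "0 < h" "h < e" "z + \<delta> \<le> w - h" "w - h < w" using h2 h3 h4 by simp_all
  show False using e(2)[OF h(1,2)] neg[OF h(3,4)] w by simp
qed

lemma q4: "(q::real)^4 = (q\<^sup>2)\<^sup>2" by simp

lemma f_p: "f_aux q = (1 - q\<^sup>2) * (1 - 4 * q\<^sup>2) * ellK q - (8 * (q\<^sup>2)\<^sup>2 - 8 * q\<^sup>2 + 1) * ellEc q"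
  unfolding f_aux_def q4 by (simp add: algebra_simps)

lemma f_r2: "0 < f_aux (1 / sqrt 2)"
proof -
  have "f_aux (1 / sqrt 2) = DD (1 / sqrt 2) / 2"
    unfolding f_p r2_sq DD_def by (simp add: field_simps power2_eq_square)
  then show ?thesis using DD_r2 pi_gt_zero by linarith
qed

lemma f_qc: "f_aux (sqrt (9/10)) < 0"
proof -
  define q :: real where "q = sqrt (9/10)"
  have q2: "q\<^sup>2 = 9/10" by (simp add: q_def)
  have q: "q\<^sup>2 < 1" by (simp add: q2)
  have "f_aux q = - (26/100) * ellK q - (28/100) * ellEc q"
    unfolding f_p q2 by (simp add: power2_eq_square)
  then show ?thesis using ellK_pos[OF q] Ec_pos[OF q] q_def by simp
qed

lemma f_zero_facts: assumes z1: "1 / sqrt 2 \<le> z" and z2: "z < 1" and f0: "f_aux z = 0"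
  shows "1 / sqrt 2 < z" "0 < DD z"
    "z * ((20 * z\<^sup>2 - 13) * ellK z + 20 * (1 - 2 * z\<^sup>2) * ellEc z) < 0"
proof -
  have zpos: "0 < z" using z1 r2_pos by linarith
  have q: "z\<^sup>2 < 1" using q_sq_lt1[OF zpos z2] .
  define p where "p = z\<^sup>2"
  have p1: "1/2 \<le> p" using power_mono[OF z1, of 2] r2_pos by (simp add: p_def r2_sq)
  have p2: "p < 1" using q by (simp add: p_def)
  define K E where "K = ellK z" and "E = ellEc z"
  have K: "0 < K" using ellK_pos[OF q] by (simp add: K_def)
  have E: "0 < E" using Ec_pos[OF q] by (simp add: E_def)
  define s where "s = 8 * p\<^sup>2 - 8 * p + 1"
  have eq: "(1 - p) * (1 - 4 * p) * K = s * E" using f0 unfolding f_p by (simp add: p_def s_def K_def E_def)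
  have lhs: "(1 - p) * (1 - 4 * p) * K < 0"
  proof -
    have "(1 - p) * (1 - 4 * p) < 0" using p1 p2 by (simp add: mult_pos_neg)
    then show ?thesis using K by (simp add: mult_neg_pos)
  qed
  have s: "s < 0"
  proof (rule ccontr)
    assume "\<not> s < 0"
    then have "0 \<le> s * E" using E by simp
    then show False using eq lhs by simp
  qed
  show "1 / sqrt 2 < z"
  proof (rule ccontr)
    assume "\<not> 1 / sqrt 2 < z"
    then have "z = 1 / sqrt 2" using z1 by simp
    then show False using f0 f_r2 by simp
  qed
  then have p3: "1/2 < p"
    using power_strict_mono[of "1 / sqrt 2" z 2] r2_pos by (simp add: p_def r2_sq)
  have "s * DD z = 2 * (s * E) - s * K"
    unfolding DD_def K_def[symmetric] E_def[symmetric] by (simp add: algebra_simps)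
  also have "\<dots> = 2 * ((1 - p) * (1 - 4 * p) * K) - s * K" using eq by simp
  also have "\<dots> = (1 - 2 * p) * K" unfolding s_def by algebra
  finally have "s * DD z = (1 - 2 * p) * K" .
  moreover have "(1 - 2 * p) * K < 0" using p3 K by (simp add: mult_neg_pos)
  ultimately show "0 < DD z" using s by (metis mult_less_0_iff not_less_iff_gr_or_eq)
  have "s * ((20 * p - 13) * K + 20 * (1 - 2 * p) * E) = (16 * p\<^sup>2 - 16 * p + 7) * K"
  proof -
    have "s * ((20 * p - 13) * K + 20 * (1 - 2 * p) * E) = (20 * p - 13) * s * K + 20 * (1 - 2 * p) * (s * E)"
      by (simp add: algebra_simps)
    also have "\<dots> = (20 * p - 13) * s * K + 20 * (1 - 2 * p) * ((1 - p) * (1 - 4 * p) * K)"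
      using eq by simp
    also have "\<dots> = (16 * p\<^sup>2 - 16 * p + 7) * K" unfolding s_def by algebra
    finally show ?thesis .
  qed
  moreover have "0 < (16 * p\<^sup>2 - 16 * p + 7) * K"
  proof -
    have "0 < 16 * p\<^sup>2 - 16 * p + 7"
    proof -
      have "16 * p\<^sup>2 - 16 * p + 7 = 16 * (p - 1/2)\<^sup>2 + 3" by (simp add: power2_eq_square algebra_simps)
      then show ?thesis by (smt (verit) zero_le_power2)
    qed
    then show ?thesis using K by simp
  qed
  ultimately have "0 < s * ((20 * p - 13) * K + 20 * (1 - 2 * p) * E)" by simp
  then have "(20 * p - 13) * K + 20 * (1 - 2 * p) * E < 0"
    using s by (simp add: zero_less_mult_iff)
  then show "z * ((20 * z\<^sup>2 - 13) * ellK z + 20 * (1 - 2 * z\<^sup>2) * ellEc z) < 0"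
    using zpos by (simp add: p_def K_def E_def mult_pos_neg)
qed

lemma f_cont_on: "0 < a \<Longrightarrow> b < 1 \<Longrightarrow> continuous_on {a..b} f_aux"
  by (intro continuous_at_imp_continuous_on ballI) (auto intro: DERIV_isCont[OF f_deriv])

lemma f_later_neg: assumes "1 / sqrt 2 \<le> z" "z < 1" "f_aux z = 0" "z < y" "y < 1"
  shows "f_aux y < 0"
proof (rule no_later_zero[where F=f_aux and y=y and a="1 / sqrt 2" and b=1 and z=z and F'="\<lambda>x. x * ((20 * x\<^sup>2 - 13) * ellK x + 20 * (1 - 2 * x\<^sup>2) * ellEc x)"])
  fix x :: real assume x: "1 / sqrt 2 \<le> x" "x < 1"
  then have xp: "0 < x" using r2_pos by linarith
  show "(f_aux has_real_derivative x * ((20 * x\<^sup>2 - 13) * ellK x + 20 * (1 - 2 * x\<^sup>2) * ellEc x)) (at x)"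
    by (rule f_deriv[OF xp x(2)])
next
  fix x :: real assume x: "1 / sqrt 2 \<le> x" "x < 1" "f_aux x = 0"
  then show "x * ((20 * x\<^sup>2 - 13) * ellK x + 20 * (1 - 2 * x\<^sup>2) * ellEc x) < 0"
    using f_zero_facts(3)[OF x] by simp
qed (use assms in auto)

lemma sqrt910: "1 / sqrt 2 < sqrt (9/10::real)" "sqrt (9/10::real) < 1"
proof -
  have "(1 / sqrt 2)\<^sup>2 < (sqrt (9/10::real))\<^sup>2" by (simp add: r2_sq)
  then show "1 / sqrt 2 < sqrt (9/10::real)" by (rule power_less_imp_less_base) simp
  show "sqrt (9/10::real) < 1" by simp
qed

lemma q_hat_props: "1 / sqrt 2 < q_hat \<and> q_hat < 1 \<and> f_aux q_hat = 0"
proof -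
  define qc :: real where "qc = sqrt (9/10)"
  have "\<exists>x\<ge>1 / sqrt 2. x \<le> qc \<and> f_aux x = 0"
    by (rule IVT2'[OF _ _ _ f_cont_on[OF r2_pos]])
       (use f_qc f_r2 sqrt910 in \<open>auto simp: qc_def less_imp_le\<close>)
  then obtain z where z: "1 / sqrt 2 \<le> z" "z \<le> qc" "f_aux z = 0" by blast
  have z1: "z < 1" using z(2) sqrt910(2) unfolding qc_def by linarith
  have "q_hat = z" unfolding q_hat_def
  proof (rule the_equality)
    show "1 / sqrt 2 \<le> z \<and> z < 1 \<and> f_aux z = 0" using z z1 by simp
  next
    fix y assume y: "1 / sqrt 2 \<le> y \<and> y < 1 \<and> f_aux y = 0"
    show "y = z"
    proof (rule ccontr)
      assume "y \<noteq> z"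
      then consider "y < z" | "z < y" by linarith
      then show False
      proof cases
        case 1 then show False using f_later_neg[of y z] y z z1 by simp
      next
        case 2 then show False using f_later_neg[of z y] y z z1 by simp
      qed
    qed
  qed
  then show ?thesis using z z1 f_zero_facts(1)[of z] by simp
qed

lemma q_hat_facts: "1 / sqrt 2 < q_hat" "q_hat < 1" "f_aux q_hat = 0" "0 < DD q_hat" "q_hat < q_star"
proof -
  show a: "1 / sqrt 2 < q_hat" "q_hat < 1" "f_aux q_hat = 0" using q_hat_props by auto
  show b: "0 < DD q_hat" using f_zero_facts(2)[of q_hat] a by simp
  show "q_hat < q_star" using DD_pos_iff[of q_hat] a b r2_pos by linarith
qed

lemma f_neg_after: "q_hat < q \<Longrightarrow> q < 1 \<Longrightarrow> f_aux q < 0"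
  using f_later_neg[of q_hat q] q_hat_facts by simp

lemma f_pos_before: assumes "1 / sqrt 2 \<le> q" "q < q_hat" shows "0 < f_aux q"
proof (rule ccontr)
  assume "\<not> 0 < f_aux q"
  then have "\<exists>x\<ge>1 / sqrt 2. x \<le> q \<and> f_aux x = 0"
    by (intro IVT2'[OF _ _ _ f_cont_on[OF r2_pos]]) (use assms f_r2 q_hat_facts in auto)
  then obtain u where u: "1 / sqrt 2 \<le> u" "u \<le> q" "f_aux u = 0" by blast
  then show False using f_later_neg[of u q_hat] assms q_hat_facts by simp
qed

lemma g_cont_on: "0 < a \<Longrightarrow> b < 1 \<Longrightarrow> continuous_on {a..b} g_aux"
  by (intro continuous_at_imp_continuous_on ballI) (auto intro: DERIV_isCont[OF g_deriv])

lemma star_facts: "1 / sqrt 2 < q_star" "q_star < 1" "DD q_star = 0"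
  using q_star_props by auto

lemma g_r2: "g_aux (1 / sqrt 2) = 0"
  by (simp add: g_aux_def r2_sq)

lemma g_star: "g_aux q_star = 0"
  using star_facts(3) by (simp add: g_aux_def DD_def)

lemma lambda_hat_pos: "0 < lambda_hat"
proof -
  have "0 < 2 * q_hat\<^sup>2 - 1"
    using power_strict_mono[OF q_hat_facts(1), of 2] r2_pos by (simp add: r2_sq)
  then show ?thesis using q_hat_facts(4)
    by (simp add: lambda_hat_def g_aux_def DD_def[symmetric])
qed

lemma g_inc: assumes "1 / sqrt 2 \<le> a" "a < b" "b \<le> q_hat" shows "g_aux a < g_aux b"
proof (rule DERIV_pos_imp_increasing_open[OF assms(2)])
  fix x assume x: "a < x" "x < b"
  have x0: "0 < x" "x < 1" using x assms r2_pos q_hat_facts by linarith+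
  have "0 < DD x" using DD_pos_iff[OF x0] x assms q_hat_facts by linarith
  moreover have "0 < f_aux x" using f_pos_before[of x] x assms by linarith
  moreover have "0 < x * (1 - x\<^sup>2)" using x0 q_sq_lt1[OF x0] by simp
  ultimately have "0 < 16 * DD x * f_aux x / (x * (1 - x\<^sup>2))" by simp
  then show "\<exists>y. (g_aux has_real_derivative y) (at x) \<and> 0 < y" using g_deriv[OF x0] by blast
next
  show "continuous_on {a..b} g_aux" using assms r2_pos q_hat_facts by (intro g_cont_on) linarith+
qed

lemma g_dec: assumes "q_hat \<le> a" "a < b" "b \<le> q_star" shows "g_aux b < g_aux a"
proof (rule DERIV_neg_imp_decreasing_open[OF assms(2)])
  fix x assume x: "a < x" "x < b"
  have x0: "0 < x" "x < 1" using x assms r2_pos q_hat_facts star_facts by linarith+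
  have "0 < DD x" using DD_pos_iff[OF x0] x assms by linarith
  moreover have "f_aux x < 0" using f_neg_after[of x] x assms x0 by linarith
  moreover have "0 < x * (1 - x\<^sup>2)" using x0 q_sq_lt1[OF x0] by simp
  ultimately have "16 * DD x * f_aux x / (x * (1 - x\<^sup>2)) < 0" by (simp add: mult_pos_neg divide_neg_pos)
  then show "\<exists>y. (g_aux has_real_derivative y) (at x) \<and> y < 0" using g_deriv[OF x0] by blast
next
  show "continuous_on {a..b} g_aux" using assms r2_pos q_hat_facts star_facts by (intro g_cont_on) linarith+
qed

lemma q1_facts: assumes c: "0 < c" "c \<le> lambda_hat"
  shows "1 / sqrt 2 < q1 c" "q1 c \<le> q_hat" "g_aux (q1 c) = c"
proof -
  have "\<exists>x\<ge>1 / sqrt 2. x \<le> q_hat \<and> g_aux x = c"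
    by (rule IVT'[OF _ _ _ g_cont_on[OF r2_pos q_hat_facts(2)]])
       (use c g_r2 q_hat_facts in \<open>auto simp: lambda_hat_def less_imp_le\<close>)
  then obtain z where z: "1 / sqrt 2 \<le> z" "z \<le> q_hat" "g_aux z = c" by blast
  have z1: "1 / sqrt 2 < z" using z c g_r2 by (cases "z = 1 / sqrt 2") auto
  have "q1 c = z" unfolding q1_def
  proof (rule the_equality)
    show "1 / sqrt 2 < z \<and> z \<le> q_hat \<and> g_aux z = c" using z z1 by simp
  next
    fix y assume y: "1 / sqrt 2 < y \<and> y \<le> q_hat \<and> g_aux y = c"
    show "y = z"
    proof (rule ccontr)
      assume "y \<noteq> z"
      then consider "y < z" | "z < y" by linarith
      then show False
      proof cases
        case 1 then show False using g_inc[of y z] y z by simp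
      next
        case 2 then show False using g_inc[of z y] y z by simp
      qed
    qed
  qed
  then show "1 / sqrt 2 < q1 c" "q1 c \<le> q_hat" "g_aux (q1 c) = c" using z z1 by auto
qed

lemma q2_facts: assumes c: "0 < c" "c \<le> lambda_hat"
  shows "q_hat \<le> q2 c" "q2 c < q_star" "g_aux (q2 c) = c"
proof -
  have hs: "q_hat < q_star" by (rule q_hat_facts(5))
  have hp: "0 < q_hat" using q_hat_facts(1) r2_pos by linarith
  have "\<exists>x\<ge>q_hat. x \<le> q_star \<and> g_aux x = c"
    by (rule IVT2'[OF _ _ _ g_cont_on])
       (use c g_star hs hp q_hat_facts star_facts in \<open>auto simp: lambda_hat_def less_imp_le\<close>)
  then obtain z where z: "q_hat \<le> z" "z \<le> q_star" "g_aux z = c" by blast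
  have z1: "z < q_star" using z c g_star by (cases "z = q_star") auto
  have "q2 c = z" unfolding q2_def
  proof (rule the_equality)
    show "q_hat \<le> z \<and> z < q_star \<and> g_aux z = c" using z z1 by simp
  next
    fix y assume y: "q_hat \<le> y \<and> y < q_star \<and> g_aux y = c"
    show "y = z"
    proof (rule ccontr)
      assume "y \<noteq> z"
      then consider "y < z" | "z < y" by linarith
      then show False
      proof cases
        case 1 then show False using g_dec[of y z] y z by simp
      next
        case 2 then show False using g_dec[of z y] y z z1 by simp
      qed
    qed
  qed
  then show "q_hat \<le> q2 c" "q2 c < q_star" "g_aux (q2 c) = c" using z z1 by auto
qed

lemma B_pos: assumes "0 < q" "q < 1"
  shows "0 < (ellEc q)\<^sup>2 - 2 * (1 - q\<^sup>2) * ellEc q * ellK q + (1 - q\<^sup>2) * (ellK q)\<^sup>2"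
proof -
  have q: "q\<^sup>2 < 1" using q_sq_lt1[OF assms] .
  have K: "0 < ellK q" using ellK_pos[OF q] .
  have "(ellEc q)\<^sup>2 - 2 * (1 - q\<^sup>2) * ellEc q * ellK q + (1 - q\<^sup>2) * (ellK q)\<^sup>2
      = (ellEc q - (1 - q\<^sup>2) * ellK q)\<^sup>2 + q\<^sup>2 * (1 - q\<^sup>2) * (ellK q)\<^sup>2"
    by (simp add: power2_eq_square algebra_simps)
  moreover have "0 < q\<^sup>2 * (1 - q\<^sup>2) * (ellK q)\<^sup>2" using assms q K by simp
  ultimately show ?thesis by (smt (verit) zero_le_power2)
qed

lemma hh_deriv_neg: assumes "0 < q" "q < q_star" "c < g_aux q"
  shows "\<exists>y. (hh c has_real_derivative y) (at q) \<and> y < 0"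
proof -
  have q1: "q < 1" using assms star_facts by linarith
  have q: "q\<^sup>2 < 1" using q_sq_lt1[OF assms(1) q1] .
  have D: "0 < DD q" using DD_pos_iff[OF assms(1) q1] assms by simp
  have "2 * ((ellEc q)\<^sup>2 - 2 * (1 - q\<^sup>2) * ellEc q * ellK q + (1 - q\<^sup>2) * (ellK q)\<^sup>2) * (c - g_aux q)
       / (q * (1 - q\<^sup>2) * (DD q)\<^sup>2) < 0"
    using B_pos[OF assms(1) q1] assms D q by (intro divide_neg_pos mult_pos_neg) auto
  then show ?thesis using h_deriv[OF assms(1) q1, of c] D by auto
qed

lemma hh_cont_on: assumes "0 < a" "b < q_star" shows "continuous_on {a..b} (hh c)"
proof (intro continuous_at_imp_continuous_on ballI)
  fix x assume x: "x \<in> {a..b}"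
  have x0: "0 < x" "x < 1" using x assms star_facts by auto
  have "DD x \<noteq> 0" using DD_pos_iff[OF x0] x assms by auto
  then show "isCont (hh c) x" using DERIV_isCont[OF h_deriv[OF x0]] by blast
qed

lemma hh_compare: assumes c: "0 < c" "c \<le> lambda_hat"
  shows "hh c (q2 c) \<le> hh c (q1 c) \<and> (hh c (q2 c) = hh c (q1 c) \<longleftrightarrow> c = lambda_hat)"
proof (cases "c = lambda_hat")
  case True
  have a: "q1 c = q_hat"
  proof (rule ccontr)
    assume "q1 c \<noteq> q_hat"
    then have "q1 c < q_hat" using q1_facts[OF c] by simp
    then show False using g_inc[of "q1 c" q_hat] q1_facts[OF c] True by (simp add: lambda_hat_def)
  qed
  have b: "q2 c = q_hat"
  proof (rule ccontr)
    assume "q2 c \<noteq> q_hat"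
    then have "q_hat < q2 c" using q2_facts[OF c] by simp
    then show False using g_dec[of q_hat "q2 c"] q2_facts[OF c] True by (simp add: lambda_hat_def)
  qed
  show ?thesis using a b True by simp
next
  case False
  then have cl: "c < lambda_hat" using c by simp
  have a: "q1 c < q_hat"
    using q1_facts[OF c] cl by (cases "q1 c = q_hat") (auto simp: lambda_hat_def)
  have b: "q_hat < q2 c"
    using q2_facts[OF c] cl by (cases "q2 c = q_hat") (auto simp: lambda_hat_def)
  have a0: "0 < q1 c" using q1_facts[OF c] r2_pos by linarith
  have "hh c (q2 c) < hh c (q1 c)"
  proof (rule DERIV_neg_imp_decreasing_open[where f="hh c"])
    show "q1 c < q2 c" using a b by simp
  next
    fix x assume x: "q1 c < x" "x < q2 c"
    have "c < g_aux x"
    proof (cases "x \<le> q_hat")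
      case True then show ?thesis using g_inc[of "q1 c" x] q1_facts[OF c] x by simp
    next
      case False then show ?thesis using g_dec[of x "q2 c"] q2_facts[OF c] x by simp
    qed
    then show "\<exists>y. (hh c has_real_derivative y) (at x) \<and> y < 0"
      using hh_deriv_neg[of x c] x a0 q2_facts[OF c] by simp
  next
    show "continuous_on {q1 c..q2 c} (hh c)" using hh_cont_on[OF a0 q2_facts(2)[OF c]] .
  qed
  then show ?thesis using False by simp
qed

lemma phi_deriv: assumes q: "q\<^sup>2 < 1"
  shows "((\<lambda>s. am (a * s - k) q) has_real_derivative a * Dl q (am (a * s - k) q)) (at s)"
proof -
  have i: "((\<lambda>s. a * s - k) has_real_derivative a) (at s)"
    by (auto intro!: derivative_eq_intros)
  show ?thesis using DERIV_chain2[OF am_deriv[OF q] i] by (simp add: mult.commute)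
qed

lemma Dlphi_deriv: assumes q: "q\<^sup>2 < 1"
  shows "((\<lambda>s. Dl q (am (a * s - k) q)) has_real_derivative
     - (a * q\<^sup>2 * sin (am (a * s - k) q) * cos (am (a * s - k) q))) (at s)"
proof -
  have "((\<lambda>s. Dl q (am (a * s - k) q)) has_real_derivative
     - (q\<^sup>2 * sin (am (a * s - k) q) * cos (am (a * s - k) q)) / Dl q (am (a * s - k) q)
       * (a * Dl q (am (a * s - k) q))) (at s)"
    by (rule DERIV_chain2[OF Dl_deriv_t[OF q] phi_deriv[OF q]])
  then show ?thesis using Dl_ne[OF q, of "am (a * s - k) q"] by (simp add: algebra_simps)
qed

lemma X_deriv: assumes q: "q\<^sup>2 < 1" and a: "a \<noteq> 0"
  shows "((\<lambda>s. (2 * ellE (am (a * s - k) q) q + C - a * s) / a) has_real_derivative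
      1 - 2 * q\<^sup>2 * (sin (am (a * s - k) q))\<^sup>2) (at s)"
proof -
  have "((\<lambda>s. (2 * ellE (am (a * s - k) q) q + C - a * s) / a) has_real_derivative
      (2 * (Dl q (am (a * s - k) q) * (a * Dl q (am (a * s - k) q))) + 0 - a) / a) (at s)"
    by (intro DERIV_cdivide[OF DERIV_diff[OF DERIV_add[OF DERIV_cmult[OF DERIV_chain2[OF ellE_deriv phi_deriv[OF q]]] DERIV_const] DERIV_cmult_Id]] )
  moreover have "(2 * (Dl q (am (a * s - k) q) * (a * Dl q (am (a * s - k) q))) + 0 - a) / a
      = 1 - 2 * q\<^sup>2 * (sin (am (a * s - k) q))\<^sup>2"
  proof -
    have "(2 * (Dl q (am (a * s - k) q) * (a * Dl q (am (a * s - k) q))) + 0 - a) / a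
        = 2 * (Dl q (am (a * s - k) q))\<^sup>2 - 1" using a by (simp add: field_simps power2_eq_square)
    then show ?thesis using Dl_sq[OF q, of "am (a * s - k) q"] by simp
  qed
  ultimately show ?thesis by simp
qed

lemma X2_deriv: assumes q: "q\<^sup>2 < 1"
  shows "((\<lambda>s. 1 - 2 * q\<^sup>2 * (sin (am (a * s - k) q))\<^sup>2) has_real_derivative
      - (4 * q\<^sup>2 * a * sin (am (a * s - k) q) * cos (am (a * s - k) q) * Dl q (am (a * s - k) q))) (at s)"
proof -
  have "((\<lambda>s. 1 - 2 * q\<^sup>2 * (sin (am (a * s - k) q))\<^sup>2) has_real_derivative
      0 - 2 * q\<^sup>2 * (2 * sin (am (a * s - k) q) * (cos (am (a * s - k) q) * (a * Dl q (am (a * s - k) q))))) (at s)"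
    by (intro DERIV_diff DERIV_const DERIV_cmult)
       (rule DERIV_chain2[OF _ DERIV_chain2[OF DERIV_sin phi_deriv[OF q]], where f="\<lambda>x. x\<^sup>2"],
        auto intro!: derivative_eq_intros)
  then show ?thesis by (simp add: algebra_simps)
qed

lemma Y_deriv: assumes q: "q\<^sup>2 < 1" and a: "a \<noteq> 0"
  shows "((\<lambda>s. 2 * q * cos (am (a * s - k) q) / a) has_real_derivative
      - (2 * q * sin (am (a * s - k) q) * Dl q (am (a * s - k) q))) (at s)"
proof -
  have "((\<lambda>s. 2 * q * cos (am (a * s - k) q) / a) has_real_derivative
      2 * q * (- sin (am (a * s - k) q) * (a * Dl q (am (a * s - k) q))) / a) (at s)"
    by (intro DERIV_cdivide DERIV_cmult DERIV_chain2[OF DERIV_cos phi_deriv[OF q]])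
  then show ?thesis using a by (simp add: field_simps)
qed

lemma Y2_deriv: assumes q: "q\<^sup>2 < 1"
  shows "((\<lambda>s. - (2 * q * sin (am (a * s - k) q) * Dl q (am (a * s - k) q))) has_real_derivative
      - (2 * q * a * cos (am (a * s - k) q) * (1 - 2 * q\<^sup>2 * (sin (am (a * s - k) q))\<^sup>2))) (at s)"
proof -
  define S C D where "S = sin (am (a * s - k) q)" and "C = cos (am (a * s - k) q)" and "D = Dl q (am (a * s - k) q)"
  have "((\<lambda>s. - (2 * q * sin (am (a * s - k) q) * Dl q (am (a * s - k) q))) has_real_derivative
      - (2 * q * (C * (a * D)) * D + - (a * q\<^sup>2 * S * C) * (2 * q * S))) (at s)"
    unfolding S_def C_def D_def
    by (intro DERIV_minus DERIV_mult DERIV_cmult DERIV_chain2[OF DERIV_sin phi_deriv[OF q]] Dlphi_deriv[OF q])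
  moreover have "- (2 * q * (C * (a * D)) * D + - (a * q\<^sup>2 * S * C) * (2 * q * S))
      = - (2 * q * a * C * (1 - 2 * q\<^sup>2 * S\<^sup>2))"
  proof -
    have "D\<^sup>2 = 1 - q\<^sup>2 * S\<^sup>2" unfolding D_def S_def by (rule Dl_sq[OF q])
    moreover have "- (2 * q * (C * (a * D)) * D + - (a * q\<^sup>2 * S * C) * (2 * q * S))
        = - (2 * q * a * C * (D\<^sup>2 - q\<^sup>2 * S\<^sup>2))" by (simp add: algebra_simps power2_eq_square)
    moreover have "D\<^sup>2 - q\<^sup>2 * S\<^sup>2 = 1 - 2 * q\<^sup>2 * S\<^sup>2" using calculation(1) by simp
    ultimately show ?thesis by simp
  qed
  ultimately show ?thesis by (simp add: S_def C_def D_def)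
qed

lemma G_deriv: assumes q: "q\<^sup>2 < 1"
  shows "((\<lambda>s. 4 * a * (ellE (am (a * s - k) q) q - (1 - q\<^sup>2) * (a * s - k))) has_real_derivative
      4 * a\<^sup>2 * q\<^sup>2 * (cos (am (a * s - k) q))\<^sup>2) (at s)"
proof -
  define D where "D = Dl q (am (a * s - k) q)"
  have "((\<lambda>s. 4 * a * (ellE (am (a * s - k) q) q - (1 - q\<^sup>2) * (a * s - k))) has_real_derivative
      4 * a * (D * (a * D) - (1 - q\<^sup>2) * (a - 0))) (at s)"
    unfolding D_def
    by (intro DERIV_cmult DERIV_diff DERIV_chain2[OF ellE_deriv phi_deriv[OF q]] DERIV_cmult_Id DERIV_const)
  moreover have "4 * a * (D * (a * D) - (1 - q\<^sup>2) * (a - 0)) = 4 * a\<^sup>2 * q\<^sup>2 * (cos (am (a * s - k) q))\<^sup>2"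
  proof -
    have D2: "D\<^sup>2 = 1 - q\<^sup>2 * (sin (am (a * s - k) q))\<^sup>2" unfolding D_def by (rule Dl_sq[OF q])
    have "4 * a * (D * (a * D) - (1 - q\<^sup>2) * (a - 0)) = 4 * a\<^sup>2 * (D\<^sup>2 - (1 - q\<^sup>2))"
      by (simp add: power2_eq_square algebra_simps)
    also have "\<dots> = 4 * a\<^sup>2 * q\<^sup>2 * (1 - (sin (am (a * s - k) q))\<^sup>2)" unfolding D2 by (simp add: algebra_simps)
    finally show ?thesis by (simp add: cos_squared_eq)
  qed
  ultimately show ?thesis by metis
qed

lemma energy_arc:
  assumes q0: "0 < q" and qs: "q < q_star" and l: "0 < l" and n: "1 \<le> n"
  shows "energy lam (arc_curve l n q) 0 (arc_end l n q) = (real n)\<^sup>2 / l * hh (lam * l\<^sup>2 / (real n)\<^sup>2) q"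
proof -
  have q1: "q < 1" using qs star_facts by linarith
  have q: "q\<^sup>2 < 1" using q_sq_lt1[OF q0 q1] .
  have Dp: "0 < DD q" using DD_pos_iff[OF q0 q1] qs by simp
  define a where "a = alpha_of l n q"
  define k where "k = ellK q"
  have a_eq: "a = 2 * real n / l * DD q" by (simp add: a_def alpha_of_def DD_def)
  have a0: "0 < a" using a_eq l n Dp by simp
  have an: "a \<noteq> 0" using a0 by simp
  have kp: "0 < k" using ellK_pos[OF q] by (simp add: k_def)
  define X where "X s = (2 * ellE (am (a * s - k) q) q + 2 * ellEc q - a * s) / a" for s
  define Y where "Y s = 2 * q * cos (am (a * s - k) q) / a" for s
  define S where "S s = sin (am (a * s - k) q)" for s
  define C where "C s = cos (am (a * s - k) q)" for s
  define D where "D s = Dl q (am (a * s - k) q)" for s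
  have fX: "(\<lambda>u. fst (arc_curve l n q u)) = X"
    by (rule ext) (simp add: arc_curve_def Let_def X_def a_def k_def)
  have fY: "(\<lambda>u. snd (arc_curve l n q u)) = Y"
    by (rule ext) (simp add: arc_curve_def Let_def Y_def a_def k_def cn_def)
  have dX: "deriv X = (\<lambda>s. 1 - 2 * q\<^sup>2 * (S s)\<^sup>2)"
    unfolding X_def S_def by (rule ext, rule DERIV_imp_deriv, rule X_deriv[OF q an])
  have ddX: "deriv (deriv X) t = - (4 * q\<^sup>2 * a * S t * C t * D t)" for t
    unfolding dX S_def C_def D_def by (rule DERIV_imp_deriv, rule X2_deriv[OF q])
  have dY: "deriv Y = (\<lambda>s. - (2 * q * S s * D s))"
    unfolding Y_def S_def D_def by (rule ext, rule DERIV_imp_deriv, rule Y_deriv[OF q an])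
  have ddY: "deriv (deriv Y) t = - (2 * q * a * C t * (1 - 2 * q\<^sup>2 * (S t)\<^sup>2))" for t
    unfolding dY S_def C_def D_def by (rule DERIV_imp_deriv, rule Y2_deriv[OF q])
  have D2: "(D t)\<^sup>2 = 1 - q\<^sup>2 * (S t)\<^sup>2" for t unfolding D_def S_def by (rule Dl_sq[OF q])
  have sp: "speed (arc_curve l n q) t = 1" for t
  proof -
    have "(1 - 2 * q\<^sup>2 * (S t)\<^sup>2)\<^sup>2 + (- (2 * q * S t * D t))\<^sup>2
        = (1 - 2 * q\<^sup>2 * (S t)\<^sup>2)\<^sup>2 + 4 * q\<^sup>2 * (S t)\<^sup>2 * (D t)\<^sup>2"
      by (simp add: power2_eq_square algebra_simps)
    also have "\<dots> = 1" unfolding D2 by (simp add: power2_eq_square algebra_simps)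
    finally show ?thesis unfolding speed_def fX fY dX dY by simp
  qed
  have kap: "signed_curvature (arc_curve l n q) t = - (2 * q * a * C t)" for t
  proof -
    have "(1 - 2 * q\<^sup>2 * (S t)\<^sup>2) * (- (2 * q * a * C t * (1 - 2 * q\<^sup>2 * (S t)\<^sup>2)))
        - (- (2 * q * S t * D t)) * (- (4 * q\<^sup>2 * a * S t * C t * D t))
        = - (2 * q * a * C t) * ((1 - 2 * q\<^sup>2 * (S t)\<^sup>2)\<^sup>2 + 4 * q\<^sup>2 * (S t)\<^sup>2 * (D t)\<^sup>2)"
      by (simp add: power2_eq_square algebra_simps)
    also have "\<dots> = - (2 * q * a * C t)" unfolding D2 by (simp add: power2_eq_square algebra_simps)
    finally show ?thesis unfolding signed_curvature_def sp fX fY ddX ddY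
      by (simp add: dX dY)
  qed
  define L where "L = arc_end l n q"
  have L_eq: "L = 2 * real n * k / a" by (simp add: L_def arc_end_def a_def k_def)
  have L0: "0 \<le> L" using L_eq a0 kp by simp
  have aL: "a * L - k = (2 * real n - 1) * k" using L_eq an by (simp add: field_simps)
  define G where "G s = 4 * a * (ellE (am (a * s - k) q) q - (1 - q\<^sup>2) * (a * s - k))" for s
  have intg: "((\<lambda>t. (signed_curvature (arc_curve l n q) t)\<^sup>2 * speed (arc_curve l n q) t)
      has_integral (G L - G 0)) {0..L}"
  proof -
    have eqf: "(\<lambda>t. (signed_curvature (arc_curve l n q) t)\<^sup>2 * speed (arc_curve l n q) t)
        = (\<lambda>t. 4 * a\<^sup>2 * q\<^sup>2 * (cos (am (a * t - k) q))\<^sup>2)"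
      by (rule ext) (simp add: kap sp C_def power2_eq_square)
    show ?thesis unfolding eqf G_def by (rule ftc_at[OF L0]) (rule G_deriv[OF q])
  qed
  have am1: "am (a * L - k) q = - pi/2 + real n * pi"
    using aL am_ellF[OF q, of "- pi/2 + real n * pi"] ellF_half[OF q, of n] by (simp add: k_def)
  have am0: "am (a * 0 - k) q = - pi/2"
    unfolding k_def using am_ellF[OF q, of "- pi/2"] ellF_half[OF q, of 0] by simp
  have GL: "G L - G 0 = 8 * real n * a * (ellEc q - (1 - q\<^sup>2) * k)"
  proof -
    have "G L - G 0 = 4 * a * (ellE (- pi/2 + real n * pi) q - (1 - q\<^sup>2) * (a * L - k))
        - 4 * a * (ellE (- pi/2) q - (1 - q\<^sup>2) * (a * 0 - k))"
      by (simp only: G_def am1 am0)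
    also have "\<dots> = 4 * a * ((2 * real n - 1) * ellEc q - (1 - q\<^sup>2) * ((2 * real n - 1) * k)
         - (- ellEc q - (1 - q\<^sup>2) * (- k)))"
      unfolding ellE_half aL using ellE_half[of 0 q] by (simp add: algebra_simps)
    finally have "G L - G 0 = 4 * a * ((2 * real n - 1) * ellEc q - (1 - q\<^sup>2) * ((2 * real n - 1) * k)
         - (- ellEc q - (1 - q\<^sup>2) * (- k)))" .
    then show ?thesis by (simp add: algebra_simps)
  qed
  have len: "curve_length (arc_curve l n q) 0 L = L"
    unfolding curve_length_def sp using L0 by simp
  have "energy lam (arc_curve l n q) 0 L = 8 * real n * a * (ellEc q - (1 - q\<^sup>2) * k) + lam * L"
    unfolding energy_def len using integral_unique[OF intg] GL by simp
  also have "\<dots> = (real n)\<^sup>2 / l * hh (lam * l\<^sup>2 / (real n)\<^sup>2) q"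
    unfolding hh_def L_eq a_eq k_def using l n Dp by (simp add: field_simps power2_eq_square)
  finally show ?thesis by (simp add: L_def)
qed

theorem lemma4p5:
  fixes lam l :: real and n :: nat
  assumes "lam > 0" and "l > 0" and "int n \<ge> n_lam lam l"
  shows "energy lam (gamma_larc lam l n) 0 (larc_end lam l n)
           \<le> energy lam (gamma_sarc lam l n) 0 (sarc_end lam l n)
    \<and> (energy lam (gamma_larc lam l n) 0 (larc_end lam l n)
           = energy lam (gamma_sarc lam l n) 0 (sarc_end lam l n)
       \<longleftrightarrow> (\<exists>m::nat. lam * l\<^sup>2 = (real m)\<^sup>2 * lambda_hat \<and> int n = n_lam lam l))"
proof -
  have lh: "0 < lambda_hat" by (rule lambda_hat_pos)
  define x where "x = sqrt (lam * l\<^sup>2 / lambda_hat)"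
  have x0: "0 < x" using assms lh by (simp add: x_def)
  have nx: "x \<le> real n"
  proof -
    have "x \<le> of_int (n_lam lam l)" unfolding n_lam_def x_def by (rule le_of_int_ceiling)
    also have "\<dots> \<le> of_int (int n)" using assms(3) by (simp only: of_int_le_iff)
    finally show ?thesis by simp
  qed
  have n1: "1 \<le> n"
  proof -
    have "0 < real n" using x0 nx by linarith
    then show ?thesis by simp
  qed
  define c where "c = lam * l\<^sup>2 / (real n)\<^sup>2"
  have c0: "0 < c" using assms n1 by (simp add: c_def)
  have x2: "x\<^sup>2 = lam * l\<^sup>2 / lambda_hat" using assms lh by (simp add: x_def)
  have "x\<^sup>2 \<le> (real n)\<^sup>2" using nx x0 by (simp add: power_mono)
  then have "lam * l\<^sup>2 \<le> (real n)\<^sup>2 * lambda_hat" using x2 lh by (simp add: divide_le_eq)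
  then have cl: "c \<le> lambda_hat" using n1 by (simp add: c_def divide_le_eq mult.commute)
  have a1: "0 < q1 c" using q1_facts(1)[OF c0 cl] r2_pos by linarith
  have a2: "q1 c < q_star" using q1_facts(2)[OF c0 cl] q_hat_facts(5) by linarith
  have b1: "0 < q2 c" using q2_facts(1)[OF c0 cl] q_hat_facts(1) r2_pos by linarith
  have b2: "q2 c < q_star" using q2_facts(2)[OF c0 cl] .
  have EL: "energy lam (gamma_larc lam l n) 0 (larc_end lam l n) = (real n)\<^sup>2 / l * hh c (q2 c)"
    unfolding gamma_larc_def larc_end_def c_def[symmetric] using energy_arc[OF b1 b2 assms(2) n1] c_def by simp
  have ES: "energy lam (gamma_sarc lam l n) 0 (sarc_end lam l n) = (real n)\<^sup>2 / l * hh c (q1 c)"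
    unfolding gamma_sarc_def sarc_end_def c_def[symmetric] using energy_arc[OF a1 a2 assms(2) n1] c_def by simp
  have fpos: "0 < (real n)\<^sup>2 / l" using n1 assms by simp
  have cmp: "hh c (q2 c) \<le> hh c (q1 c) \<and> (hh c (q2 c) = hh c (q1 c) \<longleftrightarrow> c = lambda_hat)"
    by (rule hh_compare[OF c0 cl])
  have iff: "c = lambda_hat \<longleftrightarrow> (\<exists>m::nat. lam * l\<^sup>2 = (real m)\<^sup>2 * lambda_hat \<and> int n = n_lam lam l)"
  proof
    assume "c = lambda_hat"
    then have e: "lam * l\<^sup>2 = (real n)\<^sup>2 * lambda_hat" using n1 by (simp add: c_def field_simps)
    have "n_lam lam l = int n" unfolding n_lam_def e using lh by simp
    then show "\<exists>m::nat. lam * l\<^sup>2 = (real m)\<^sup>2 * lambda_hat \<and> int n = n_lam lam l" using e by auto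
  next
    assume "\<exists>m::nat. lam * l\<^sup>2 = (real m)\<^sup>2 * lambda_hat \<and> int n = n_lam lam l"
    then obtain m :: nat where m: "lam * l\<^sup>2 = (real m)\<^sup>2 * lambda_hat" "int n = n_lam lam l" by blast
    have "n_lam lam l = int m" unfolding n_lam_def m(1) using lh by simp
    then have "m = n" using m(2) by simp
    then show "c = lambda_hat" using m(1) n1 by (simp add: c_def)
  qed
  have le: "(real n)\<^sup>2 / l * hh c (q2 c) \<le> (real n)\<^sup>2 / l * hh c (q1 c)"
    using cmp fpos by (intro mult_left_mono) auto
  have eqiff: "((real n)\<^sup>2 / l * hh c (q2 c) = (real n)\<^sup>2 / l * hh c (q1 c)) \<longleftrightarrow> (hh c (q2 c) = hh c (q1 c))"
    using fpos mult_left_cancel[of "(real n)\<^sup>2 / l" "hh c (q2 c)" "hh c (q1 c)"] by linarith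
  show ?thesis unfolding EL ES using le eqiff cmp iff by blast
qed
end
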